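(* Let $M$ be a pointed metric space which is not both bounded and uniformly discrete (i.e. $M$ is unbounded or $\inf\{d(x,y):x,y\in M,\ x\neq y\}=0$). Then $\mathcal F(M)\widehat{\otimes}_\pi X$ is octahedral for every non-zero Banach space $X$.
   Context: All Banach spaces are real. $\mathcal F(M)$ is the Lipschitz-free space over the pointed metric space $M$ (the closed linear span of the evaluation functionals $\delta_p$, $p\in M$, in $\mathrm{Lip}_0(M)^*$, where $\mathrm{Lip}_0(M)$ is the space of real Lipschitz functions vanishing at the base point with the Lipschitz-constant norm), and $\widehat{\otimes}_\pi$ is the projective tensor product. A metric space is uniformly discrete if $\inf\{d(x,y):x\neq y\}>0$. A Banach space $Z$ is octahedral if for every $x_1,\dots,x_n\in S_Z$ and $\varepsilon>0$ there is $y\in S_Z$ with $\|x_i-y\|\ge 2-\varepsilon$ for all $i=1,\dots,n$. *)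

theory Defs
  imports "HOL-Analysis.Analysis"
begin

text \<open>Generic device: a normed space realised as the closed linear span of a set S of
  functionals inside the dual of a normed function space W with closed unit ball U.\<close>

definition dual_closed_span :: "'f set \<Rightarrow> 'f set \<Rightarrow> ('f \<Rightarrow> real) set \<Rightarrow> ('f \<Rightarrow> real) set" where
  "dual_closed_span W U S =
     {\<phi>. (\<forall>f. f \<notin> W \<longrightarrow> \<phi> f = 0) \<and>
          (\<forall>\<epsilon>>0. \<exists>(n::nat) c s. (\<forall>i<n. s i \<in> S) \<and>
               (\<forall>f\<in>U. \<bar>\<phi> f - (\<Sum>i<n. c i * s i f)\<bar> \<le> \<epsilon>))}"

definition dual_norm :: "'f set \<Rightarrow> ('f \<Rightarrow> real) \<Rightarrow> real" where
  "dual_norm U \<phi> = Sup ((\<lambda>f. \<bar>\<phi> f\<bar>) ` U)"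

definition Lip0 :: "'a::metric_space set \<Rightarrow> 'a \<Rightarrow> ('a \<Rightarrow> real) set" where
  "Lip0 M p0 = {f. (\<exists>C. lipschitz_on C M f) \<and> f p0 = 0 \<and> (\<forall>x. x \<notin> M \<longrightarrow> f x = 0)}"

definition Lip0_ball :: "'a::metric_space set \<Rightarrow> 'a \<Rightarrow> ('a \<Rightarrow> real) set" where
  "Lip0_ball M p0 = {f \<in> Lip0 M p0. lipschitz_on 1 M f}"

definition evalF :: "'a::metric_space set \<Rightarrow> 'a \<Rightarrow> 'a \<Rightarrow> ('a \<Rightarrow> real) \<Rightarrow> real" where
  "evalF M p0 p = (\<lambda>f. if f \<in> Lip0 M p0 then f p else 0)"

definition FreeSp :: "'a::metric_space set \<Rightarrow> 'a \<Rightarrow> (('a \<Rightarrow> real) \<Rightarrow> real) set" where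
  "FreeSp M p0 = dual_closed_span (Lip0 M p0) (Lip0_ball M p0) {evalF M p0 p | p. p \<in> M}"

definition FreeNorm :: "'a::metric_space set \<Rightarrow> 'a \<Rightarrow> (('a \<Rightarrow> real) \<Rightarrow> real) \<Rightarrow> real" where
  "FreeNorm M p0 = dual_norm (Lip0_ball M p0)"

definition bounded_bilinear_forms ::
  "('f \<Rightarrow> real) set \<Rightarrow> (('f \<Rightarrow> real) \<Rightarrow> real) \<Rightarrow> (('f \<Rightarrow> real) \<Rightarrow> 'x::real_normed_vector \<Rightarrow> real) set" where
  "bounded_bilinear_forms E nE =
     {B. (\<forall>e x. e \<notin> E \<longrightarrow> B e x = 0) \<and>
         (\<forall>e\<in>E. linear (B e)) \<and>
         (\<forall>x. \<forall>e\<in>E. \<forall>e'\<in>E. \<forall>a b. B (\<lambda>t. a * e t + b * e' t) x = a * B e x + b * B e' x) \<and>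
         (\<exists>C. \<forall>e\<in>E. \<forall>x. \<bar>B e x\<bar> \<le> C * nE e * norm x)}"

definition bilinear_ball ::
  "('f \<Rightarrow> real) set \<Rightarrow> (('f \<Rightarrow> real) \<Rightarrow> real) \<Rightarrow> (('f \<Rightarrow> real) \<Rightarrow> 'x::real_normed_vector \<Rightarrow> real) set" where
  "bilinear_ball E nE = {B \<in> bounded_bilinear_forms E nE. \<forall>e\<in>E. \<forall>x. \<bar>B e x\<bar> \<le> nE e * norm x}"

text \<open>Projective tensor product E (x)_pi X, realised (isometrically, via
  (E (x)_pi X)^* = Bil(E x X)) as the closed linear span of the elementary tensors
  e (x) x : B |-> B e x in the dual of the space of bounded bilinear forms.\<close>

definition proj_tensor ::
  "('f \<Rightarrow> real) set \<Rightarrow> (('f \<Rightarrow> real) \<Rightarrow> real) \<Rightarrow>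
   ((('f \<Rightarrow> real) \<Rightarrow> 'x::real_normed_vector \<Rightarrow> real) \<Rightarrow> real) set" where
  "proj_tensor E nE =
     dual_closed_span (bounded_bilinear_forms E nE) (bilinear_ball E nE)
       {(\<lambda>B. if B \<in> bounded_bilinear_forms E nE then B e x else 0) | e x. e \<in> E}"

definition proj_tensor_norm ::
  "('f \<Rightarrow> real) set \<Rightarrow> (('f \<Rightarrow> real) \<Rightarrow> real) \<Rightarrow>
   ((('f \<Rightarrow> real) \<Rightarrow> 'x::real_normed_vector \<Rightarrow> real) \<Rightarrow> real) \<Rightarrow> real" where
  "proj_tensor_norm E nE = dual_norm (bilinear_ball E nE)"

definition octahedral :: "('g \<Rightarrow> real) set \<Rightarrow> (('g \<Rightarrow> real) \<Rightarrow> real) \<Rightarrow> bool" where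
  "octahedral Z N \<longleftrightarrow>
     (\<forall>xs \<epsilon>. set xs \<subseteq> {z \<in> Z. N z = 1} \<and> \<epsilon> > 0 \<longrightarrow>
        (\<exists>y\<in>Z. N y = 1 \<and> (\<forall>x\<in>set xs. N (\<lambda>t. x t - y t) \<ge> 2 - \<epsilon>)))"

definition uniformly_discrete :: "'a::metric_space set \<Rightarrow> bool" where
  "uniformly_discrete M \<longleftrightarrow> (\<exists>r>0. \<forall>x\<in>M. \<forall>y\<in>M. x \<noteq> y \<longrightarrow> r \<le> dist x y)"

end

theory Submission
  imports Defs
begin


definition good_graph :: "'x::real_normed_vector \<Rightarrow> ('x \<times> real) set \<Rightarrow> bool" where
  "good_graph x0 G \<longleftrightarrow>
     (\<forall>x a b. (x,a)\<in>G \<longrightarrow> (x,b)\<in>G \<longrightarrow> a = b) \<and> (x0, norm x0) \<in> G \<and>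
     (\<forall>x a y b. (x,a)\<in>G \<longrightarrow> (y,b)\<in>G \<longrightarrow> (x+y, a+b) \<in> G) \<and>
     (\<forall>x a c. (x,a)\<in>G \<longrightarrow> (c *\<^sub>R x, c*a) \<in> G) \<and>
     (\<forall>x a. (x,a)\<in>G \<longrightarrow> a \<le> norm x)"

lemma good_graph_extend:
  fixes G :: "('x::real_normed_vector \<times> real) set"
  assumes g: "good_graph x0 G" and y: "y \<notin> fst ` G"
  shows "\<exists>G'. good_graph x0 G' \<and> G \<subseteq> G' \<and> G' \<noteq> G"
proof -
  have fnc: "\<And>x a b. (x,a)\<in>G \<Longrightarrow> (x,b)\<in>G \<Longrightarrow> a = b"
    and x0: "(x0, norm x0) \<in> G"
    and add: "\<And>x a z b. (x,a)\<in>G \<Longrightarrow> (z,b)\<in>G \<Longrightarrow> (x+z, a+b) \<in> G"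
    and sc: "\<And>x a c. (x,a)\<in>G \<Longrightarrow> (c *\<^sub>R x, c*a) \<in> G"
    and bd: "\<And>x a. (x,a)\<in>G \<Longrightarrow> a \<le> norm x"
    using g unfolding good_graph_def by blast+
  have zero: "(0, 0) \<in> G" using sc[OF x0, of 0] by simp
  define S where "S = (\<lambda>p. snd p - norm (fst p - y)) ` G"
  have key: "a - norm (x - y) \<le> norm (z + y) - b" if "(x,a)\<in>G" "(z,b)\<in>G" for x a z b
  proof -
    have "a + b \<le> norm (x + z)" using bd[OF add[OF that]] .
    also have "\<dots> \<le> norm (x - y) + norm (z + y)"
      using norm_triangle_ineq[of "x - y" "z + y"] by simp
    finally show ?thesis by simp
  qed
  have Sne: "S \<noteq> {}" using zero unfolding S_def by blast
  have Sbdd: "bdd_above S" unfolding S_def bdd_above_def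
    using key[OF _ zero] by fastforce
  define c where "c = Sup S"
  have c1: "a - norm (x - y) \<le> c" if "(x,a)\<in>G" for x a
    unfolding c_def using that by (intro cSup_upper[OF _ Sbdd]) (force simp: S_def)
  have c2: "c \<le> norm (z + y) - b" if "(z,b)\<in>G" for z b
    unfolding c_def using Sne key[OF _ that] by (intro cSup_least) (auto simp: S_def)
  define G' where "G' = {(x + t *\<^sub>R y, a + t * c) | x a t. (x,a) \<in> G}"
  have sub: "G \<subseteq> G'" unfolding G'_def by force
  have yin: "(y, c) \<in> G'" unfolding G'_def using zero by force
  have neq: "G' \<noteq> G" using yin y by force
  have uniq: "t = s \<and> x = z" if "(x,a)\<in>G" "(z,b)\<in>G" "x + t *\<^sub>R y = z + s *\<^sub>R y" for x a z b t s
  proof (rule ccontr)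
    assume "\<not> (t = s \<and> x = z)"
    then have ts: "t \<noteq> s" using that(3) by auto
    have "(t - s) *\<^sub>R y = z - x" using that(3) by (simp add: algebra_simps)
    then have "y = (1/(t-s)) *\<^sub>R (z - x)" using ts
    proof -
      have "y = (1/(t-s)) *\<^sub>R ((t - s) *\<^sub>R y)" using ts by simp
      then show ?thesis using \<open>(t - s) *\<^sub>R y = z - x\<close> by simp
    qed
    moreover have "(z - x, b - a) \<in> G" using add[OF that(2) sc[OF that(1), of "-1"]] by simp
    ultimately have "(y, (1/(t-s)) * (b - a)) \<in> G" using sc by metis
    then show False using y by force
  qed
  have "good_graph x0 G'"
    unfolding good_graph_def
  proof (intro conjI allI impI)
    fix x a b assume "(x,a)\<in>G'" "(x,b)\<in>G'"
    then obtain x1 a1 t1 x2 a2 t2 where h: "(x1,a1)\<in>G" "(x2,a2)\<in>G" "x = x1 + t1 *\<^sub>R y"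
      "a = a1 + t1*c" "x = x2 + t2 *\<^sub>R y" "b = a2 + t2*c" unfolding G'_def by blast
    then have "t1 = t2 \<and> x1 = x2" using uniq[OF h(1,2), of t1 t2] by simp
    then show "a = b" using h fnc by auto
  next
    show "(x0, norm x0) \<in> G'" using sub x0 by blast
  next
    fix x a z b assume "(x,a)\<in>G'" "(z,b)\<in>G'"
    then obtain x1 a1 t1 x2 a2 t2 where h: "(x1,a1)\<in>G" "(x2,a2)\<in>G" "x = x1 + t1 *\<^sub>R y"
      "a = a1 + t1*c" "z = x2 + t2 *\<^sub>R y" "b = a2 + t2*c" unfolding G'_def by blast
    have "(x1+x2, a1+a2) \<in> G" using add h by blast
    moreover have "x + z = (x1+x2) + (t1+t2) *\<^sub>R y" "a + b = (a1+a2) + (t1+t2)*c"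
      using h by (auto simp: algebra_simps)
    ultimately show "(x+z, a+b) \<in> G'" unfolding G'_def by blast
  next
    fix x a r assume "(x,a)\<in>G'"
    then obtain x1 a1 t1 where h: "(x1,a1)\<in>G" "x = x1 + t1 *\<^sub>R y" "a = a1 + t1*c"
      unfolding G'_def by blast
    have "(r *\<^sub>R x1, r*a1) \<in> G" using sc h by blast
    moreover have "r *\<^sub>R x = r *\<^sub>R x1 + (r*t1) *\<^sub>R y" "r * a = r*a1 + (r*t1)*c"
      using h by (auto simp: algebra_simps)
    ultimately show "(r *\<^sub>R x, r*a) \<in> G'" unfolding G'_def by blast
  next
    fix x a assume "(x,a)\<in>G'"
    then obtain x1 a1 t where h: "(x1,a1)\<in>G" "x = x1 + t *\<^sub>R y" "a = a1 + t*c"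
      unfolding G'_def by blast
    show "a \<le> norm x"
    proof (cases "t = 0")
      case True then show ?thesis using h bd by simp
    next
      case False
      have h1: "((1/t) *\<^sub>R x1, (1/t)*a1) \<in> G" using sc h(1) by blast
      show ?thesis
      proof (cases "t > 0")
        case True
        have "c \<le> norm ((1/t) *\<^sub>R x1 + y) - (1/t)*a1" using c2[OF h1] .
        then have "t * c \<le> t * (norm ((1/t) *\<^sub>R x1 + y) - (1/t)*a1)"
          using True by (simp add: mult_left_mono)
        also have "\<dots> = norm (t *\<^sub>R ((1/t) *\<^sub>R x1 + y)) - a1"
          using True by (simp add: right_diff_distrib)
        also have "t *\<^sub>R ((1/t) *\<^sub>R x1 + y) = x1 + t *\<^sub>R y" using True by (simp add: algebra_simps)
        finally show ?thesis using h by simp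
      next
        case False
        with \<open>t \<noteq> 0\<close> have tn: "t < 0" by simp
        have h2: "((-1/t) *\<^sub>R x1, (-1/t)*a1) \<in> G" using sc h(1) by blast
        have "(-1/t)*a1 - norm ((-1/t) *\<^sub>R x1 - y) \<le> c" using c1[OF h2] .
        then have "(-t) * ((-1/t)*a1 - norm ((-1/t) *\<^sub>R x1 - y)) \<le> (-t) * c"
          using tn by (simp add: mult_left_mono)
        also have "(-t) * ((-1/t)*a1 - norm ((-1/t) *\<^sub>R x1 - y)) = a1 - (-t) * norm ((-1/t) *\<^sub>R x1 - y)"
          using tn by (simp add: algebra_simps)
        also have "(- t) * norm ((-1/t) *\<^sub>R x1 - y) = norm ((-t) *\<^sub>R ((-1/t) *\<^sub>R x1 - y))"
          using tn by simp
        also have "(-t) *\<^sub>R ((-1/t) *\<^sub>R x1 - y) = x1 + t *\<^sub>R y" using tn by (simp add: algebra_simps)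
        finally show ?thesis using h by simp
      qed
    qed
  qed
  then show ?thesis using sub neq by blast
qed

lemma hahn_banach_norming:
  fixes x0 :: "'x::real_normed_vector"
  shows "\<exists>f. linear f \<and> f x0 = norm x0 \<and> (\<forall>x. \<bar>f x\<bar> \<le> norm x)"
proof -
  define A where "A = {G. good_graph x0 G}"
  define G0 where "G0 = {(t *\<^sub>R x0, t * norm x0) | t. True}"
  have G0: "good_graph x0 G0"
    unfolding good_graph_def G0_def
  proof (intro conjI allI impI)
    fix x a b assume "(x, a) \<in> {(t *\<^sub>R x0, t * norm x0) |t. True}" "(x, b) \<in> {(t *\<^sub>R x0, t * norm x0) |t. True}"
    then obtain t s where "x = t *\<^sub>R x0" "a = t * norm x0" "x = s *\<^sub>R x0" "b = s * norm x0" by blast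
    then show "a = b"
      by (metis norm_scaleR abs_mult_pos norm_ge_zero abs_of_nonneg mult.commute
          scaleR_cancel_right mult_zero_left norm_zero)
  next
    show "(x0, norm x0) \<in> {(t *\<^sub>R x0, t * norm x0) |t. True}"
      by (rule CollectI, rule exI[of _ 1]) simp
  next
    fix x a y b assume "(x, a) \<in> {(t *\<^sub>R x0, t * norm x0) |t. True}" "(y, b) \<in> {(t *\<^sub>R x0, t * norm x0) |t. True}"
    then obtain t s where "x = t *\<^sub>R x0" "a = t * norm x0" "y = s *\<^sub>R x0" "b = s * norm x0" by blast
    then show "(x + y, a + b) \<in> {(t *\<^sub>R x0, t * norm x0) |t. True}"
      by (intro CollectI exI[of _ "t+s"]) (simp add: algebra_simps)
  next
    fix x a c assume "(x, a) \<in> {(t *\<^sub>R x0, t * norm x0) |t. True}"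
    then obtain t where "x = t *\<^sub>R x0" "a = t * norm x0" by blast
    then show "(c *\<^sub>R x, c * a) \<in> {(t *\<^sub>R x0, t * norm x0) |t. True}"
      by (intro CollectI exI[of _ "c*t"]) (simp add: algebra_simps)
  next
    fix x a assume "(x, a) \<in> {(t *\<^sub>R x0, t * norm x0) |t. True}"
    then obtain t where "x = t *\<^sub>R x0" "a = t * norm x0" by blast
    then show "a \<le> norm x" by (simp add: mult_right_mono)
  qed
  have "\<forall>C\<in>chains A. \<exists>U\<in>A. \<forall>X\<in>C. X \<subseteq> U"
  proof
    fix C assume C: "C \<in> chains A"
    show "\<exists>U\<in>A. \<forall>X\<in>C. X \<subseteq> U"
    proof (cases "C = {}")
      case True then show ?thesis using G0 A_def by blast
    next
      case False
      have CA: "\<And>X. X \<in> C \<Longrightarrow> good_graph x0 X" using chainsD2[OF C] A_def by blast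
      have two: "\<exists>X\<in>C. p \<in> X \<and> q \<in> X" if "p \<in> \<Union>C" "q \<in> \<Union>C" for p q
        using that chainsD[OF C] by blast
      have "good_graph x0 (\<Union>C)"
        unfolding good_graph_def
      proof (intro conjI allI impI)
        fix x a b assume "(x,a) \<in> \<Union>C" "(x,b) \<in> \<Union>C"
        then obtain X where "X \<in> C" "(x,a)\<in>X" "(x,b)\<in>X" using two by blast
        then show "a = b" using CA unfolding good_graph_def by blast
      next
        show "(x0, norm x0) \<in> \<Union>C" using False CA unfolding good_graph_def by blast
      next
        fix x a y b assume "(x,a) \<in> \<Union>C" "(y,b) \<in> \<Union>C"
        then obtain X where "X \<in> C" "(x,a)\<in>X" "(y,b)\<in>X" using two by blast
        then show "(x+y, a+b) \<in> \<Union>C" using CA unfolding good_graph_def by blast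
      next
        fix x a c assume "(x,a) \<in> \<Union>C"
        then obtain X where "X \<in> C" "(x,a)\<in>X" by blast
        then show "(c *\<^sub>R x, c*a) \<in> \<Union>C" using CA unfolding good_graph_def by blast
      next
        fix x a assume "(x,a) \<in> \<Union>C"
        then obtain X where "X \<in> C" "(x,a)\<in>X" by blast
        then show "a \<le> norm x" using CA unfolding good_graph_def by blast
      qed
      then show ?thesis unfolding A_def by blast
    qed
  qed
  from Zorn_Lemma2[OF this] obtain G where GA: "G \<in> A" and max: "\<forall>X\<in>A. G \<subseteq> X \<longrightarrow> X = G"
    by blast
  have g: "good_graph x0 G" using GA A_def by blast
  have dom: "\<forall>x. \<exists>a. (x,a) \<in> G"
  proof (rule ccontr)
    assume "\<not> (\<forall>x. \<exists>a. (x,a) \<in> G)"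
    then obtain y where "y \<notin> fst ` G" by force
    from good_graph_extend[OF g this] max A_def show False by blast
  qed
  have fnc: "\<And>x a b. (x,a)\<in>G \<Longrightarrow> (x,b)\<in>G \<Longrightarrow> a = b"
    and x0: "(x0, norm x0) \<in> G"
    and add: "\<And>x a z b. (x,a)\<in>G \<Longrightarrow> (z,b)\<in>G \<Longrightarrow> (x+z, a+b) \<in> G"
    and sc: "\<And>x a c. (x,a)\<in>G \<Longrightarrow> (c *\<^sub>R x, c*a) \<in> G"
    and bd: "\<And>x a. (x,a)\<in>G \<Longrightarrow> a \<le> norm x"
    using g unfolding good_graph_def by blast+
  define f where "f x = (THE a. (x,a) \<in> G)" for x
  have fG: "(x, f x) \<in> G" for x
    unfolding f_def using dom fnc by (metis theI)
  have fval: "(x,a) \<in> G \<Longrightarrow> f x = a" for x a using fG fnc by blast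
  have lin: "linear f"
  proof (rule linearI)
    fix x y show "f (x + y) = f x + f y" using fval[OF add[OF fG fG]] .
  next
    fix r x show "f (r *\<^sub>R x) = r *\<^sub>R f x" using fval[OF sc[OF fG]] by simp
  qed
  have "\<bar>f x\<bar> \<le> norm x" for x
  proof -
    have "f x \<le> norm x" using bd[OF fG] .
    moreover have "f (-x) \<le> norm x" using bd[OF fG, of "-x"] by simp
    moreover have "f (-x) = - f x" using linear_neg[OF lin] by simp
    ultimately show ?thesis by linarith
  qed
  then show ?thesis using lin fval[OF x0] by blast
qed



definition sumL :: "(real \<times> ('f \<Rightarrow> real)) list \<Rightarrow> 'f \<Rightarrow> real" where
  "sumL L f = (\<Sum>p\<leftarrow>L. fst p * snd p f)"

lemma sumL_append[simp]: "sumL (L1 @ L2) f = sumL L1 f + sumL L2 f"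
  by (simp add: sumL_def)

lemma sumL_Nil[simp]: "sumL [] f = 0" by (simp add: sumL_def)
lemma sumL_Cons[simp]: "sumL (p # L) f = fst p * snd p f + sumL L f" by (simp add: sumL_def)

lemma sumL_scale: "sumL (map (\<lambda>p. (a * fst p, snd p)) L) f = a * sumL L f"
  by (induct L) (auto simp: algebra_simps)

lemma dcs_list:
  "\<phi> \<in> dual_closed_span W U S \<longleftrightarrow> (\<forall>f. f \<notin> W \<longrightarrow> \<phi> f = 0) \<and>
     (\<forall>\<epsilon>>0. \<exists>L. set (map snd L) \<subseteq> S \<and> (\<forall>f\<in>U. \<bar>\<phi> f - sumL L f\<bar> \<le> \<epsilon>))"
proof -
  have A: "(\<exists>(n::nat) c s. (\<forall>i<n. s i \<in> S) \<and> (\<forall>f\<in>U. \<bar>\<phi> f - (\<Sum>i<n. c i * s i f)\<bar> \<le> \<epsilon>))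
      \<longleftrightarrow> (\<exists>L. set (map snd L) \<subseteq> S \<and> (\<forall>f\<in>U. \<bar>\<phi> f - sumL L f\<bar> \<le> \<epsilon>))" for \<epsilon>
  proof
    assume "\<exists>(n::nat) c s. (\<forall>i<n. s i \<in> S) \<and> (\<forall>f\<in>U. \<bar>\<phi> f - (\<Sum>i<n. c i * s i f)\<bar> \<le> \<epsilon>)"
    then obtain n :: nat and c s where h: "\<forall>i<n. s i \<in> S" "\<forall>f\<in>U. \<bar>\<phi> f - (\<Sum>i<n. c i * s i f)\<bar> \<le> \<epsilon>"
      by blast
    define L where "L = map (\<lambda>i. (c i, s i)) [0..<n]"
    have "sumL L f = (\<Sum>i<n. c i * s i f)" for f
      unfolding sumL_def L_def by (simp add: o_def sum_list_sum_nth atLeast0LessThan)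
    moreover have "set (map snd L) \<subseteq> S" using h(1) unfolding L_def by auto
    ultimately show "\<exists>L. set (map snd L) \<subseteq> S \<and> (\<forall>f\<in>U. \<bar>\<phi> f - sumL L f\<bar> \<le> \<epsilon>)"
      using h(2) by metis
  next
    assume "\<exists>L. set (map snd L) \<subseteq> S \<and> (\<forall>f\<in>U. \<bar>\<phi> f - sumL L f\<bar> \<le> \<epsilon>)"
    then obtain L where h: "set (map snd L) \<subseteq> S" "\<forall>f\<in>U. \<bar>\<phi> f - sumL L f\<bar> \<le> \<epsilon>" by blast
    have "sumL L f = (\<Sum>i<length L. fst (L!i) * snd (L!i) f)" for f
      unfolding sumL_def by (simp add: sum_list_sum_nth atLeast0LessThan)
    moreover have "\<forall>i<length L. snd (L!i) \<in> S" using h(1) nth_mem by fastforce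
    ultimately show "\<exists>(n::nat) c s. (\<forall>i<n. s i \<in> S) \<and> (\<forall>f\<in>U. \<bar>\<phi> f - (\<Sum>i<n. c i * s i f)\<bar> \<le> \<epsilon>)"
      using h(2) by (intro exI[of _ "length L"] exI[of _ "\<lambda>i. fst (L!i)"] exI[of _ "\<lambda>i. snd (L!i)"]) auto
  qed
  show ?thesis unfolding dual_closed_span_def using A by auto
qed

lemma dcs_comb:
  assumes "\<phi> \<in> dual_closed_span W U S" "\<psi> \<in> dual_closed_span W U S"
  shows "(\<lambda>t. a * \<phi> t + b * \<psi> t) \<in> dual_closed_span W U S"
  unfolding dcs_list
proof (intro conjI allI impI)
  fix f assume "f \<notin> W" then show "a * \<phi> f + b * \<psi> f = 0" using assms unfolding dcs_list by simp
next
  fix \<epsilon> :: real assume e: "\<epsilon> > 0"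
  define e1 where "e1 = \<epsilon> / (2 * (\<bar>a\<bar> + 1))"
  define e2 where "e2 = \<epsilon> / (2 * (\<bar>b\<bar> + 1))"
  have e1: "e1 > 0" "\<bar>a\<bar> * e1 \<le> \<epsilon>/2" using e unfolding e1_def by (auto simp: field_simps)
  have e2: "e2 > 0" "\<bar>b\<bar> * e2 \<le> \<epsilon>/2" using e unfolding e2_def by (auto simp: field_simps)
  obtain L1 where L1: "set (map snd L1) \<subseteq> S" "\<forall>f\<in>U. \<bar>\<phi> f - sumL L1 f\<bar> \<le> e1"
    using assms(1) e1(1) unfolding dcs_list by blast
  obtain L2 where L2: "set (map snd L2) \<subseteq> S" "\<forall>f\<in>U. \<bar>\<psi> f - sumL L2 f\<bar> \<le> e2"
    using assms(2) e2(1) unfolding dcs_list by blast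
  define L where "L = map (\<lambda>p. (a * fst p, snd p)) L1 @ map (\<lambda>p. (b * fst p, snd p)) L2"
  have "set (map snd L) \<subseteq> S" using L1(1) L2(1) unfolding L_def by auto
  moreover have "\<bar>(a * \<phi> f + b * \<psi> f) - sumL L f\<bar> \<le> \<epsilon>" if "f \<in> U" for f
  proof -
    have "(a * \<phi> f + b * \<psi> f) - sumL L f = a * (\<phi> f - sumL L1 f) + b * (\<psi> f - sumL L2 f)"
      unfolding L_def by (simp add: sumL_scale algebra_simps)
    also have "\<bar>\<dots>\<bar> \<le> \<bar>a\<bar> * \<bar>\<phi> f - sumL L1 f\<bar> + \<bar>b\<bar> * \<bar>\<psi> f - sumL L2 f\<bar>"
      by (metis abs_mult abs_triangle_ineq)
    also have "\<dots> \<le> \<bar>a\<bar> * e1 + \<bar>b\<bar> * e2"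
      using L1(2) L2(2) that by (intro add_mono mult_left_mono) auto
    finally show ?thesis using e1 e2 by linarith
  qed
  ultimately show "\<exists>L. set (map snd L) \<subseteq> S \<and> (\<forall>f\<in>U. \<bar>(a * \<phi> f + b * \<psi> f) - sumL L f\<bar> \<le> \<epsilon>)"
    by blast
qed

lemma dcs_S:
  assumes "s \<in> S" "\<forall>f. f \<notin> W \<longrightarrow> s f = 0"
  shows "s \<in> dual_closed_span W U S"
  unfolding dcs_list using assms by (intro conjI allI impI exI[of _ "[(1,s)]"]) auto

lemma sumL_bounded:
  assumes "\<forall>s\<in>set (map snd L). \<exists>C. \<forall>f\<in>U. \<bar>s f\<bar> \<le> C"
  shows "\<exists>C. \<forall>f\<in>U. \<bar>sumL L f\<bar> \<le> C"
  using assms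
proof (induct L)
  case Nil then show ?case by auto
next
  case (Cons p L)
  then obtain C1 where C1: "\<forall>f\<in>U. \<bar>sumL L f\<bar> \<le> C1" by auto
  obtain C2 where C2: "\<forall>f\<in>U. \<bar>snd p f\<bar> \<le> C2" using Cons.prems by auto
  have "\<bar>sumL (p # L) f\<bar> \<le> \<bar>fst p\<bar> * C2 + C1" if "f \<in> U" for f
  proof -
    have "\<bar>sumL (p # L) f\<bar> \<le> \<bar>fst p\<bar> * \<bar>snd p f\<bar> + \<bar>sumL L f\<bar>"
      using abs_triangle_ineq[of "fst p * snd p f" "sumL L f"] by (simp add: abs_mult)
    also have "\<dots> \<le> \<bar>fst p\<bar> * C2 + C1" using C1 C2 that by (intro add_mono mult_left_mono) auto
    finally show ?thesis .
  qed
  then show ?case by blast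
qed

lemma dcs_bounded:
  assumes "\<forall>s\<in>S. \<exists>C. \<forall>f\<in>U. \<bar>s f\<bar> \<le> C" "\<phi> \<in> dual_closed_span W U S"
  shows "\<exists>C. \<forall>f\<in>U. \<bar>\<phi> f\<bar> \<le> C"
proof -
  obtain L where L: "set (map snd L) \<subseteq> S" "\<forall>f\<in>U. \<bar>\<phi> f - sumL L f\<bar> \<le> 1"
    using assms(2) unfolding dcs_list by (meson zero_less_one)
  obtain C where C: "\<forall>f\<in>U. \<bar>sumL L f\<bar> \<le> C" using sumL_bounded[of L U] L(1) assms(1) by blast
  have "\<bar>\<phi> f\<bar> \<le> 1 + C" if "f \<in> U" for f
  proof -
    have "\<bar>\<phi> f - sumL L f\<bar> \<le> 1" "\<bar>sumL L f\<bar> \<le> C" using L(2) C that by auto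
    then show ?thesis by linarith
  qed
  then show ?thesis by blast
qed

lemma small_zero:
  fixes x K :: real
  assumes "\<And>\<epsilon>. \<epsilon> > 0 \<Longrightarrow> \<bar>x\<bar> \<le> \<epsilon> * K" "K > 0"
  shows "x = 0"
proof (rule ccontr)
  assume "x \<noteq> 0"
  then have "\<bar>x\<bar> > 0" by simp
  then have "\<bar>x\<bar> \<le> (\<bar>x\<bar> / (2*K)) * K" using assms(1)[of "\<bar>x\<bar> / (2*K)"] assms(2) by simp
  also have "\<dots> = \<bar>x\<bar> / 2" using assms(2) by simp
  finally show False using \<open>\<bar>x\<bar> > 0\<close> by simp
qed

lemma dcs_rel:
  assumes "\<forall>s\<in>S. s g3 = a * s g1 + b * s g2" "g1 \<in> U" "g2 \<in> U" "g3 \<in> U"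
    "\<phi> \<in> dual_closed_span W U S"
  shows "\<phi> g3 = a * \<phi> g1 + b * \<phi> g2"
proof -
  have "\<bar>\<phi> g3 - (a * \<phi> g1 + b * \<phi> g2)\<bar> \<le> \<epsilon> * (1 + \<bar>a\<bar> + \<bar>b\<bar>)" if e: "\<epsilon> > 0" for \<epsilon>
  proof -
    obtain L where L: "set (map snd L) \<subseteq> S" "\<forall>f\<in>U. \<bar>\<phi> f - sumL L f\<bar> \<le> \<epsilon>"
      using assms(5) e unfolding dcs_list by blast
    have rel: "sumL L g3 = a * sumL L g1 + b * sumL L g2"
      using L(1)
    proof (induct L)
      case Nil then show ?case by simp
    next
      case (Cons p L)
      have "snd p g3 = a * snd p g1 + b * snd p g2" using Cons.prems assms(1) by simp
      then show ?case using Cons by (simp add: distrib_left)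
    qed
    have "\<phi> g3 - (a * \<phi> g1 + b * \<phi> g2) = (\<phi> g3 - sumL L g3) - a * (\<phi> g1 - sumL L g1) - b * (\<phi> g2 - sumL L g2)"
      using rel by (simp add: algebra_simps)
    also have "\<bar>\<dots>\<bar> \<le> \<bar>\<phi> g3 - sumL L g3\<bar> + \<bar>a\<bar> * \<bar>\<phi> g1 - sumL L g1\<bar> + \<bar>b\<bar> * \<bar>\<phi> g2 - sumL L g2\<bar>"
    proof -
      have "\<And>A B C :: real. \<bar>A - B - C\<bar> \<le> \<bar>A\<bar> + \<bar>B\<bar> + \<bar>C\<bar>" by linarith
      from this[of "\<phi> g3 - sumL L g3" "a * (\<phi> g1 - sumL L g1)" "b * (\<phi> g2 - sumL L g2)"]
      show ?thesis by (simp only: abs_mult)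
    qed
    also have "\<dots> \<le> \<epsilon> + \<bar>a\<bar> * \<epsilon> + \<bar>b\<bar> * \<epsilon>"
      using L(2) assms(2-4) by (intro add_mono mult_left_mono) auto
    finally show ?thesis by (simp add: algebra_simps)
  qed
  then show ?thesis using small_zero[of "\<phi> g3 - (a * \<phi> g1 + b * \<phi> g2)" "1 + \<bar>a\<bar> + \<bar>b\<bar>"] by simp
qed

lemma dn_upper:
  assumes "\<forall>f\<in>U. \<bar>\<phi> f\<bar> \<le> C" "f \<in> U"
  shows "\<bar>\<phi> f\<bar> \<le> dual_norm U \<phi>"
proof -
  have "bdd_above ((\<lambda>f. \<bar>\<phi> f\<bar>) ` U)" using assms(1) by (intro bdd_aboveI2[where M=C]) blast
  then show ?thesis unfolding dual_norm_def using assms(2) by (rule cSUP_upper[rotated])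
qed

lemma dn_least:
  assumes "U \<noteq> {}" "\<forall>f\<in>U. \<bar>\<phi> f\<bar> \<le> C"
  shows "dual_norm U \<phi> \<le> C"
  unfolding dual_norm_def using assms(1) by (rule cSUP_least) (use assms(2) in blast)

lemma dn_nonneg:
  assumes "U \<noteq> {}" "\<forall>f\<in>U. \<bar>\<phi> f\<bar> \<le> C"
  shows "0 \<le> dual_norm U \<phi>"
proof -
  obtain f where "f \<in> U" using assms(1) by blast
  then have "\<bar>\<phi> f\<bar> \<le> dual_norm U \<phi>" by (rule dn_upper[OF assms(2)])
  then show ?thesis by linarith
qed

lemma dn_approx:
  assumes "U \<noteq> {}" "\<forall>f\<in>U. \<bar>\<phi> f\<bar> \<le> C" "t < dual_norm U \<phi>"
  shows "\<exists>f\<in>U. t < \<bar>\<phi> f\<bar>"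
proof -
  have "bdd_above ((\<lambda>f. \<bar>\<phi> f\<bar>) ` U)" using assms(2) by (intro bdd_aboveI2[where M=C]) blast
  from less_cSUP_iff[OF assms(1) this, of t] assms(3) show ?thesis unfolding dual_norm_def by simp
qed

lemma dn_scale:
  assumes "U \<noteq> {}" "\<forall>f\<in>U. \<bar>\<phi> f\<bar> \<le> C"
  shows "dual_norm U (\<lambda>t. c * \<phi> t) = \<bar>c\<bar> * dual_norm U \<phi>"
proof (rule antisym)
  have "\<bar>c * \<phi> f\<bar> \<le> \<bar>c\<bar> * dual_norm U \<phi>" if "f \<in> U" for f
    unfolding abs_mult by (rule mult_left_mono[OF dn_upper[OF assms(2) that]]) simp
  then show "dual_norm U (\<lambda>t. c * \<phi> t) \<le> \<bar>c\<bar> * dual_norm U \<phi>"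
    using assms(1) by (intro dn_least) auto
next
  show "\<bar>c\<bar> * dual_norm U \<phi> \<le> dual_norm U (\<lambda>t. c * \<phi> t)"
  proof (cases "c = 0")
    case True
    have "\<forall>f\<in>U. \<bar>c * \<phi> f\<bar> \<le> 0" using True by simp
    then show ?thesis using dn_nonneg[OF assms(1), of "\<lambda>t. c * \<phi> t" 0] True by simp
  next
    case False
    have b2: "\<forall>f\<in>U. \<bar>c * \<phi> f\<bar> \<le> \<bar>c\<bar> * C"
      using assms(2) unfolding abs_mult by (auto intro: mult_left_mono)
    have "\<bar>\<phi> f\<bar> \<le> dual_norm U (\<lambda>t. c * \<phi> t) / \<bar>c\<bar>" if "f \<in> U" for f
    proof -
      have "\<bar>c\<bar> * \<bar>\<phi> f\<bar> \<le> dual_norm U (\<lambda>t. c * \<phi> t)"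
        using dn_upper[OF b2 that] unfolding abs_mult .
      then show ?thesis using False by (simp add: le_divide_eq mult.commute)
    qed
    then have "dual_norm U \<phi> \<le> dual_norm U (\<lambda>t. c * \<phi> t) / \<bar>c\<bar>"
      using assms(1) by (intro dn_least) auto
    then show ?thesis using False by (simp add: le_divide_eq mult.commute)
  qed
qed



lemma dcs_zero: "(\<lambda>_. 0) \<in> dual_closed_span W U S"
  unfolding dcs_list by (intro conjI allI impI exI[of _ "[]"]) auto

lemma Lip0_ball_zero: "(\<lambda>_. 0) \<in> Lip0_ball M p0"
  unfolding Lip0_ball_def Lip0_def by (auto simp: lipschitz_on_def)

lemma Lip0_ball_ne: "Lip0_ball M p0 \<noteq> {}" using Lip0_ball_zero by blast

lemma Lip0_ballD:
  assumes "g \<in> Lip0_ball M p0"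
  shows "g \<in> Lip0 M p0" "g p0 = 0" "\<And>x. x \<notin> M \<Longrightarrow> g x = 0" "lipschitz_on 1 M g"
  using assms unfolding Lip0_ball_def Lip0_def by auto

lemma Lip0_ball_diff:
  assumes "g \<in> Lip0_ball M p0" "p \<in> M" "q \<in> M"
  shows "\<bar>g p - g q\<bar> \<le> dist p q"
  using lipschitz_onD[OF Lip0_ballD(4)[OF assms(1)] assms(2,3)] by (simp add: dist_real_def)

lemma Lip0_ball_bound:
  assumes "g \<in> Lip0_ball M p0" "p \<in> M" "p0 \<in> M"
  shows "\<bar>g p\<bar> \<le> dist p p0"
  using Lip0_ball_diff[OF assms(1,2,3)] Lip0_ballD(2)[OF assms(1)] by simp

lemma evalF_Lip0: "g \<in> Lip0 M p0 \<Longrightarrow> evalF M p0 p g = g p"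
  unfolding evalF_def by simp

lemma evalF_out: "p \<notin> M \<Longrightarrow> evalF M p0 p = (\<lambda>_. 0)"
  unfolding evalF_def Lip0_def by (rule ext) auto

lemma evalF_in: "evalF M p0 p \<in> FreeSp M p0"
proof (cases "p \<in> M")
  case True
  show ?thesis unfolding FreeSp_def
    by (rule dcs_S) (use True in \<open>auto simp: evalF_def\<close>)
next
  case False
  show ?thesis unfolding FreeSp_def evalF_out[OF False] by (rule dcs_zero)
qed

lemma FreeSp_comb:
  "e \<in> FreeSp M p0 \<Longrightarrow> e' \<in> FreeSp M p0 \<Longrightarrow> (\<lambda>t. a * e t + b * e' t) \<in> FreeSp M p0"
  unfolding FreeSp_def by (rule dcs_comb)

lemma FreeSp_bounded:
  assumes "p0 \<in> M" "e \<in> FreeSp M p0"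
  shows "\<exists>C. \<forall>g\<in>Lip0_ball M p0. \<bar>e g\<bar> \<le> C"
proof -
  have "\<forall>s\<in>{evalF M p0 p |p. p \<in> M}. \<exists>C. \<forall>g\<in>Lip0_ball M p0. \<bar>s g\<bar> \<le> C"
  proof
    fix s assume "s \<in> {evalF M p0 p |p. p \<in> M}"
    then obtain p where p: "p \<in> M" "s = evalF M p0 p" by blast
    have "\<bar>s g\<bar> \<le> dist p p0" if "g \<in> Lip0_ball M p0" for g
      using p Lip0_ball_bound[OF that p(1) assms(1)] evalF_Lip0[OF Lip0_ballD(1)[OF that]] by simp
    then show "\<exists>C. \<forall>g\<in>Lip0_ball M p0. \<bar>s g\<bar> \<le> C" by blast
  qed
  then show ?thesis using dcs_bounded assms(2) unfolding FreeSp_def by blast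
qed

lemma FreeSp_rel:
  assumes "e \<in> FreeSp M p0" "g1 \<in> Lip0_ball M p0" "g2 \<in> Lip0_ball M p0" "g3 \<in> Lip0_ball M p0"
    "g3 = (\<lambda>t. a * g1 t + b * g2 t)"
  shows "e g3 = a * e g1 + b * e g2"
proof -
  have "\<forall>s\<in>{evalF M p0 p |p. p \<in> M}. s g3 = a * s g1 + b * s g2"
  proof
    fix s assume "s \<in> {evalF M p0 p |p. p \<in> M}"
    then obtain p where p: "s = evalF M p0 p" by blast
    show "s g3 = a * s g1 + b * s g2"
      unfolding p using evalF_Lip0[OF Lip0_ballD(1)[OF assms(2)]] evalF_Lip0[OF Lip0_ballD(1)[OF assms(3)]]
        evalF_Lip0[OF Lip0_ballD(1)[OF assms(4)]] assms(5) by simp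
  qed
  from dcs_rel[OF this assms(2-4)] assms(1) show ?thesis unfolding FreeSp_def by blast
qed

lemma FreeNorm_upper:
  assumes "p0 \<in> M" "e \<in> FreeSp M p0" "g \<in> Lip0_ball M p0"
  shows "\<bar>e g\<bar> \<le> FreeNorm M p0 e"
proof -
  obtain C where "\<forall>g\<in>Lip0_ball M p0. \<bar>e g\<bar> \<le> C" using FreeSp_bounded[OF assms(1,2)] by blast
  then show ?thesis unfolding FreeNorm_def by (rule dn_upper) (rule assms(3))
qed

lemma FreeNorm_diff:
  assumes "u \<in> M" "c \<in> M"
  shows "FreeNorm M p0 (\<lambda>t. evalF M p0 u t - evalF M p0 c t) \<le> dist u c"
  unfolding FreeNorm_def
proof (rule dn_least[OF Lip0_ball_ne], rule ballI)
  fix g assume g: "g \<in> Lip0_ball M p0"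
  show "\<bar>evalF M p0 u g - evalF M p0 c g\<bar> \<le> dist u c"
    using Lip0_ball_diff[OF g assms] evalF_Lip0[OF Lip0_ballD(1)[OF g]] by simp
qed

lemma FreeNorm_p0:
  shows "FreeNorm M p0 (evalF M p0 p0) \<le> 0"
  unfolding FreeNorm_def
proof (rule dn_least[OF Lip0_ball_ne], rule ballI)
  fix g assume g: "g \<in> Lip0_ball M p0"
  show "\<bar>evalF M p0 p0 g\<bar> \<le> 0"
    using Lip0_ballD(2)[OF g] evalF_Lip0[OF Lip0_ballD(1)[OF g]] by simp
qed



lemma construct_form:
  fixes Gf :: "'x::real_normed_vector \<Rightarrow> 'a::metric_space \<Rightarrow> real"
  assumes p0: "p0 \<in> M" and lin: "\<And>m. linear (\<lambda>x. Gf x m)"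
    and unit: "\<And>x. norm x = 1 \<Longrightarrow> Gf x \<in> Lip0_ball M p0"
  defines "Bc \<equiv> (\<lambda>e x. if e \<in> FreeSp M p0 then norm x * e (Gf (sgn x)) else 0)"
  shows "Bc \<in> bilinear_ball (FreeSp M p0) (FreeNorm M p0)"
    and "\<And>p x. p \<in> M \<Longrightarrow> Bc (evalF M p0 p) x = Gf x p"
proof -
  define g where "g x = Gf (sgn x)" for x
  have gU: "g x \<in> Lip0_ball M p0" if "x \<noteq> 0" for x
    unfolding g_def using unit that by (simp add: norm_sgn)
  have Gadd: "Gf (x + y) = (\<lambda>m. Gf x m + Gf y m)" for x y
    using lin unfolding linear_iff by (simp add: fun_eq_iff)
  have Gsc: "Gf (r *\<^sub>R x) = (\<lambda>m. r * Gf x m)" for r x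
    using lin unfolding linear_iff by (simp add: fun_eq_iff)
  have G0: "Gf 0 m = 0" for m using fun_cong[OF Gsc[of 0 0], of m] by simp
  have Gx: "Gf x = (\<lambda>m. norm x * g x m)" for x
  proof -
    have "x = norm x *\<^sub>R sgn x" by (cases "x = 0") (simp_all add: sgn_div_norm)
    then have "Gf x = Gf (norm x *\<^sub>R sgn x)" by simp
    then show ?thesis using Gsc g_def by simp
  qed
  have Bcx: "Bc e x = norm x * e (g x)" if "e \<in> FreeSp M p0" for e x
    using that unfolding Bc_def g_def by simp
  have gsc: "e (g (r *\<^sub>R x)) = sgn r * e (g x)" if "e \<in> FreeSp M p0" "x \<noteq> 0" "r \<noteq> 0" for e r x
  proof -
    have "g (r *\<^sub>R x) = (\<lambda>m. sgn r * g x m + 0 * g x m)"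
      unfolding g_def by (simp add: sgn_scaleR Gsc)
    moreover have "r *\<^sub>R x \<noteq> 0" using that by simp
    ultimately show ?thesis
      using FreeSp_rel[OF that(1) gU[OF that(2)] gU[OF that(2)] gU[of "r *\<^sub>R x"], of "sgn r" 0] by simp
  qed
  have lin_e: "linear (Bc e)" if "e \<in> FreeSp M p0" for e
  proof (rule linearI)
    fix x y
    show "Bc e (x + y) = Bc e x + Bc e y"
    proof (cases "x = 0 \<or> y = 0")
      case True then show ?thesis using Bcx[OF that] by auto
    next
      case False
      then have x: "x \<noteq> 0" and y: "y \<noteq> 0" by auto
      show ?thesis
      proof (cases "x + y = 0")
        case True
        then have yx: "y = (-1) *\<^sub>R x" by (simp add: add_eq_0_iff2)
        have "e (g y) = - e (g x)" using gsc[OF that x, of "-1"] yx by simp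
        then show ?thesis using Bcx[OF that] True yx by simp
      next
        case False
        have nz: "norm (x + y) \<noteq> 0" using False by simp
        have "norm (x + y) * g (x+y) m = norm x * g x m + norm y * g y m" for m
          using fun_cong[OF Gx[of "x+y"], of m] fun_cong[OF Gx[of x], of m] fun_cong[OF Gx[of y], of m]
            fun_cong[OF Gadd[of x y], of m] by simp
        then have "g (x+y) m = (norm x / norm (x+y)) * g x m + (norm y / norm (x+y)) * g y m" for m
          using nz by (simp add: field_simps)
        then have "g (x + y) = (\<lambda>m. (norm x / norm (x+y)) * g x m + (norm y / norm (x+y)) * g y m)"
          by (rule ext)
        then have "e (g (x+y)) = (norm x / norm (x+y)) * e (g x) + (norm y / norm (x+y)) * e (g y)"
          by (rule FreeSp_rel[OF that gU[OF x] gU[OF y] gU[OF False]])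
        then show ?thesis using Bcx[OF that] False by (simp add: field_simps)
      qed
    qed
  next
    fix r x
    show "Bc e (r *\<^sub>R x) = r *\<^sub>R Bc e x"
    proof (cases "r = 0 \<or> x = 0")
      case True then show ?thesis using Bcx[OF that] by auto
    next
      case False
      then have "e (g (r *\<^sub>R x)) = sgn r * e (g x)" using gsc[OF that] by simp
      moreover have "\<bar>r\<bar> * sgn r = r" by (simp add: abs_mult_sgn)
      ultimately have "\<bar>r\<bar> * norm x * e (g (r *\<^sub>R x)) = r * (norm x * e (g x))"
        by (metis mult.assoc mult.left_commute)
      then show ?thesis using Bcx[OF that, of "r *\<^sub>R x"] Bcx[OF that, of x] by simp
    qed
  qed
  have bound: "\<bar>Bc e x\<bar> \<le> FreeNorm M p0 e * norm x" if "e \<in> FreeSp M p0" for e x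
  proof (cases "x = 0")
    case True then show ?thesis using Bcx[OF that] by simp
  next
    case False
    have "\<bar>e (g x)\<bar> \<le> FreeNorm M p0 e"
      using FreeNorm_upper[OF p0 _ gU[OF False]] that by simp
    then have "norm x * \<bar>e (g x)\<bar> \<le> norm x * FreeNorm M p0 e" by (rule mult_left_mono) simp
    then show ?thesis using Bcx[OF that] by (simp add: abs_mult mult.commute)
  qed
  have bil: "Bc (\<lambda>t. a * e t + b * e' t) x = a * Bc e x + b * Bc e' x"
    if "e \<in> FreeSp M p0" "e' \<in> FreeSp M p0" for e e' a b x
  proof -
    have "(\<lambda>t. a * e t + b * e' t) \<in> FreeSp M p0" using FreeSp_comb that by blast
    then show ?thesis using Bcx that by (simp add: algebra_simps)
  qed
  have off: "Bc e x = 0" if "e \<notin> FreeSp M p0" for e x using that unfolding Bc_def by simp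
  have "Bc \<in> bounded_bilinear_forms (FreeSp M p0) (FreeNorm M p0)"
    unfolding bounded_bilinear_forms_def mem_Collect_eq
  proof (intro conjI)
    show "\<forall>e x. e \<notin> FreeSp M p0 \<longrightarrow> Bc e x = 0" using off by blast
    show "\<forall>e\<in>FreeSp M p0. linear (Bc e)" using lin_e by blast
    show "\<forall>x. \<forall>e\<in>FreeSp M p0. \<forall>e'\<in>FreeSp M p0. \<forall>a b. Bc (\<lambda>t. a * e t + b * e' t) x = a * Bc e x + b * Bc e' x"
      using bil by blast
    show "\<exists>C. \<forall>e\<in>FreeSp M p0. \<forall>x. \<bar>Bc e x\<bar> \<le> C * FreeNorm M p0 e * norm x"
      using bound by (intro exI[of _ 1]) simp
  qed
  then show "Bc \<in> bilinear_ball (FreeSp M p0) (FreeNorm M p0)"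
    unfolding bilinear_ball_def using bound by blast
  fix p x assume p: "p \<in> M"
  show "Bc (evalF M p0 p) x = Gf x p"
  proof (cases "x = 0")
    case True then show ?thesis using Bcx[OF evalF_in[of M p0 p], of x] G0 by simp
  next
    case False
    have "Bc (evalF M p0 p) x = norm x * g x p"
      using Bcx[OF evalF_in[of M p0 p], of x] evalF_Lip0[OF Lip0_ballD(1)[OF gU[OF False]]]
      by simp
    then show ?thesis using Gx by simp
  qed
qed



lemma bb_linear:
  "B \<in> bilinear_ball E nE \<Longrightarrow> e \<in> E \<Longrightarrow> linear (B e)"
  unfolding bilinear_ball_def bounded_bilinear_forms_def by blast

lemma bb_bil:
  "B \<in> bilinear_ball E nE \<Longrightarrow> e \<in> E \<Longrightarrow> e' \<in> E \<Longrightarrow>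
     B (\<lambda>t. a * e t + b * e' t) x = a * B e x + b * B e' x"
  unfolding bilinear_ball_def bounded_bilinear_forms_def by blast

lemma bb_bound:
  "B \<in> bilinear_ball E nE \<Longrightarrow> e \<in> E \<Longrightarrow> \<bar>B e x\<bar> \<le> nE e * norm x"
  unfolding bilinear_ball_def by blast

lemma bb_off:
  "B \<in> bilinear_ball E nE \<Longrightarrow> e \<notin> E \<Longrightarrow> B e x = 0"
  unfolding bilinear_ball_def bounded_bilinear_forms_def by blast

lemma bb_neg:
  assumes "B \<in> bilinear_ball E nE"
  shows "(\<lambda>e x. - B e x) \<in> bilinear_ball E nE"
proof -
  have "linear (\<lambda>x. - B e x)" if "e \<in> E" for e
    using bb_linear[OF assms that] unfolding linear_iff by simp
  moreover have "\<exists>C. \<forall>e\<in>E. \<forall>x. \<bar>B e x\<bar> \<le> C * nE e * norm x"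
    using assms unfolding bilinear_ball_def bounded_bilinear_forms_def by blast
  ultimately show ?thesis
    using bb_bil[OF assms] bb_bound[OF assms] bb_off[OF assms]
    unfolding bilinear_ball_def bounded_bilinear_forms_def mem_Collect_eq
    by (intro conjI) (simp_all add: algebra_simps)
qed

lemma G0_props:
  assumes p0: "p0 \<in> M" and B: "B \<in> bilinear_ball (FreeSp M p0) (FreeNorm M p0)"
  shows "linear (B (evalF M p0 m))"
    and "B (evalF M p0 p0) x = 0"
    and "m \<in> M \<Longrightarrow> m' \<in> M \<Longrightarrow> \<bar>B (evalF M p0 m) x - B (evalF M p0 m') x\<bar> \<le> norm x * dist m m'"
proof -
  show "linear (B (evalF M p0 m))" by (rule bb_linear[OF B evalF_in])
  have "\<bar>B (evalF M p0 p0) x\<bar> \<le> FreeNorm M p0 (evalF M p0 p0) * norm x"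
    by (rule bb_bound[OF B evalF_in])
  also have "\<dots> \<le> 0" using FreeNorm_p0[of M p0] by (simp add: mult_nonpos_nonneg)
  finally show "B (evalF M p0 p0) x = 0" by simp
next
  assume m: "m \<in> M" "m' \<in> M"
  have "B (\<lambda>t. 1 * evalF M p0 m t + (-1) * evalF M p0 m' t) x = 1 * B (evalF M p0 m) x + (-1) * B (evalF M p0 m') x"
    by (rule bb_bil[OF B evalF_in evalF_in])
  then have eq: "B (evalF M p0 m) x - B (evalF M p0 m') x = B (\<lambda>t. evalF M p0 m t - evalF M p0 m' t) x"
    by simp
  have inE: "(\<lambda>t. evalF M p0 m t - evalF M p0 m' t) \<in> FreeSp M p0"
    using FreeSp_comb[OF evalF_in[of M p0 m] evalF_in[of M p0 m'], of 1 "-1"] by simp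
  have "\<bar>B (\<lambda>t. evalF M p0 m t - evalF M p0 m' t) x\<bar> \<le> FreeNorm M p0 (\<lambda>t. evalF M p0 m t - evalF M p0 m' t) * norm x"
    by (rule bb_bound[OF B inE])
  also have "\<dots> \<le> dist m m' * norm x"
    by (rule mult_right_mono[OF FreeNorm_diff[OF m]]) simp
  finally show "\<bar>B (evalF M p0 m) x - B (evalF M p0 m') x\<bar> \<le> norm x * dist m m'"
    unfolding eq by (simp add: mult.commute)
qed

lemma mix_bound:
  fixes g0m g0m' g0c am am' dm dm' dmm' X xsx \<kappa> :: real
  assumes h1: "\<bar>g0m - g0m'\<bar> \<le> X * dmm'" and h2: "\<bar>g0m' - g0c\<bar> \<le> X * dm'"
    and a0: "0 \<le> am" and a1: "am \<le> 1" and hx: "\<bar>xsx\<bar> \<le> X"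
    and hd: "\<bar>dm - dm'\<bar> \<le> dmm'" and ha: "\<bar>am - am'\<bar> * dm' \<le> \<kappa> * dmm'"
    and X0: "0 \<le> X" and d0: "0 \<le> dm'"
  shows "\<bar>(g0m + am * (g0c - dm * xsx - g0m)) - (g0m' + am' * (g0c - dm' * xsx - g0m'))\<bar>
           \<le> (1 + 2 * \<kappa>) * X * dmm'"
proof -
  define D where "D = g0c - dm' * xsx - g0m'"
  have eq: "(g0m + am * (g0c - dm * xsx - g0m)) - (g0m' + am' * (g0c - dm' * xsx - g0m'))
      = (1 - am) * (g0m - g0m') - am * ((dm - dm') * xsx) + (am - am') * D"
    unfolding D_def by (simp add: algebra_simps)
  have t1: "\<bar>(1 - am) * (g0m - g0m')\<bar> \<le> (1 - am) * (X * dmm')"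
    using h1 a1 by (simp add: abs_mult mult_left_mono)
  have "\<bar>(dm - dm') * xsx\<bar> \<le> dmm' * X"
    unfolding abs_mult by (rule mult_mono[OF hd hx]) (auto intro: order_trans[OF abs_ge_zero hd])
  then have t2: "\<bar>am * ((dm - dm') * xsx)\<bar> \<le> am * (X * dmm')"
    using a0 by (simp add: abs_mult mult_left_mono mult.commute)
  have "\<bar>D\<bar> \<le> \<bar>g0c - g0m'\<bar> + \<bar>dm' * xsx\<bar>" unfolding D_def by linarith
  also have "\<dots> \<le> X * dm' + dm' * X"
    using h2 hx d0 by (intro add_mono) (auto simp: abs_minus_commute abs_mult mult_left_mono)
  finally have Db: "\<bar>D\<bar> \<le> 2 * X * dm'" by simp
  have "\<bar>(am - am') * D\<bar> \<le> \<bar>am - am'\<bar> * (2 * X * dm')"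
    unfolding abs_mult by (rule mult_left_mono[OF Db]) simp
  also have "\<dots> = 2 * X * (\<bar>am - am'\<bar> * dm')" by simp
  also have "\<dots> \<le> 2 * X * (\<kappa> * dmm')" by (rule mult_left_mono[OF ha]) (use X0 in simp)
  finally have t3: "\<bar>(am - am') * D\<bar> \<le> 2 * X * (\<kappa> * dmm')" .
  have "\<bar>(1 - am) * (g0m - g0m') - am * ((dm - dm') * xsx) + (am - am') * D\<bar>
     \<le> (1 - am) * (X * dmm') + am * (X * dmm') + 2 * X * (\<kappa> * dmm')"
    using t1 t2 t3 by linarith
  also have "\<dots> = (1 + 2 * \<kappa>) * X * dmm'" by (simp add: algebra_simps)
  finally show ?thesis unfolding eq .
qed



lemma modify_form:
  fixes B :: "(('a::metric_space \<Rightarrow> real) \<Rightarrow> real) \<Rightarrow> 'x::real_normed_vector \<Rightarrow> real"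
  assumes p0: "p0 \<in> M" and B: "B \<in> bilinear_ball (FreeSp M p0) (FreeNorm M p0)" and c: "c \<in> M"
    and xs: "linear xs" and xsb: "\<And>x. \<bar>xs x\<bar> \<le> norm x"
    and a0: "\<And>m. 0 \<le> a m" and a1: "\<And>m. a m \<le> 1" and k0: "0 \<le> \<kappa>"
    and alog: "\<And>m m'. \<bar>a m - a m'\<bar> * min (dist m c) (dist m' c) \<le> \<kappa> * dist m m'"
    and ap0: "p0 = c \<or> a p0 = 0"
  shows "\<exists>B' \<in> bilinear_ball (FreeSp M p0) (FreeNorm M p0). \<forall>p\<in>M. \<forall>x.
     B' (evalF M p0 p) x = (B (evalF M p0 p) x + a p * (B (evalF M p0 c) x - dist p c * xs x - B (evalF M p0 p) x)) / (1 + 2*\<kappa>)"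
proof -
  define G0 where "G0 x m = B (evalF M p0 m) x" for x m
  define core where "core x m = G0 x m + a m * (G0 x c - dist m c * xs x - G0 x m)" for x m
  define Gf where "Gf x m = (if m \<in> M then core x m / (1 + 2*\<kappa>) else 0)" for x m
  have lam: "1 + 2*\<kappa> > 0" using k0 by simp
  have G0add: "G0 (x + y) m = G0 x m + G0 y m" for x y m
    using G0_props(1)[OF p0 B, of m] unfolding linear_iff G0_def by simp
  have G0sc: "G0 (r *\<^sub>R x) m = r * G0 x m" for r x m
    using G0_props(1)[OF p0 B, of m] unfolding linear_iff G0_def by simp
  have xsadd: "xs (x + y) = xs x + xs y" for x y using xs unfolding linear_iff by simp
  have xssc: "xs (r *\<^sub>R x) = r * xs x" for r x using xs unfolding linear_iff by simp
  have coreadd: "core (x + y) m = core x m + core y m" for x y m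
    unfolding core_def G0add xsadd by (simp add: algebra_simps)
  have coresc: "core (r *\<^sub>R x) m = r * core x m" for r x m
    unfolding core_def G0sc xssc by (simp add: algebra_simps)
  have lin: "linear (\<lambda>x. Gf x m)" for m
  proof (rule linearI)
    fix x y show "Gf (x + y) m = Gf x m + Gf y m"
      unfolding Gf_def coreadd by (simp add: add_divide_distrib)
  next
    fix r x show "Gf (r *\<^sub>R x) m = r *\<^sub>R Gf x m"
      unfolding Gf_def coresc by simp
  qed
  have G0lip: "\<bar>G0 x m - G0 x m'\<bar> \<le> norm x * dist m m'" if "m \<in> M" "m' \<in> M" for x m m'
    unfolding G0_def by (rule G0_props(3)[OF p0 B that])
  have core_half: "\<bar>core x m - core x m'\<bar> \<le> (1 + 2*\<kappa>) * norm x * dist m m'"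
    if "m \<in> M" "m' \<in> M" "dist m' c \<le> dist m c" for x m m'
  proof -
    have ha: "\<bar>a m - a m'\<bar> * dist m' c \<le> \<kappa> * dist m m'"
      using alog[of m m'] that(3) by (simp add: min_absorb2)
    have hd: "\<bar>dist m c - dist m' c\<bar> \<le> dist m m'"
      using abs_dist_diff_le[of m c m'] by (simp add: dist_commute)
    have h2: "\<bar>G0 x m' - G0 x c\<bar> \<le> norm x * dist m' c" by (rule G0lip[OF that(2) c])
    show ?thesis unfolding core_def
      by (rule mix_bound[OF G0lip[OF that(1,2)] h2 a0 a1 xsb hd ha norm_ge_zero zero_le_dist])
  qed
  have core_lip: "\<bar>core x m - core x m'\<bar> \<le> (1 + 2*\<kappa>) * norm x * dist m m'"
    if "m \<in> M" "m' \<in> M" for x m m'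
  proof (cases "dist m' c \<le> dist m c")
    case True then show ?thesis using core_half[OF that True] by simp
  next
    case False
    then have "dist m c \<le> dist m' c" by simp
    from core_half[OF that(2,1) this, of x] show ?thesis
      by (simp add: abs_minus_commute dist_commute)
  qed
  have unit: "Gf x \<in> Lip0_ball M p0" if nx: "norm x = 1" for x
  proof -
    have lip: "lipschitz_on 1 M (Gf x)"
      unfolding lipschitz_on_def
    proof (intro conjI ballI)
      fix m m' assume m: "m \<in> M" "m' \<in> M"
      have "\<bar>core x m / (1 + 2*\<kappa>) - core x m' / (1 + 2*\<kappa>)\<bar> = \<bar>core x m - core x m'\<bar> / (1 + 2*\<kappa>)"
        using lam by (simp add: diff_divide_distrib[symmetric])
      also have "\<dots> \<le> ((1 + 2*\<kappa>) * dist m m') / (1 + 2*\<kappa>)"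
        using core_lip[OF m, of x] nx lam by (intro divide_right_mono) auto
      also have "\<dots> = dist m m'" using lam by simp
      finally show "dist (Gf x m) (Gf x m') \<le> 1 * dist m m'"
        unfolding Gf_def dist_real_def using m by simp
    qed simp
    have "G0 x p0 = 0" unfolding G0_def by (rule G0_props(2)[OF p0 B])
    then have "core x p0 = 0" using ap0 unfolding core_def by auto
    then have gp0: "Gf x p0 = 0" unfolding Gf_def by simp
    have out: "\<forall>y. y \<notin> M \<longrightarrow> Gf x y = 0" unfolding Gf_def by simp
    show ?thesis unfolding Lip0_ball_def Lip0_def using lip gp0 out by blast
  qed
  obtain Bc where Bc: "Bc \<in> bilinear_ball (FreeSp M p0) (FreeNorm M p0)"
    "\<And>p x. p \<in> M \<Longrightarrow> Bc (evalF M p0 p) x = Gf x p"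
    using construct_form[OF p0 lin unit] by blast
  show ?thesis
    by (rule bexI[OF _ Bc(1)]) (simp add: Bc(2) Gf_def core_def G0_def)
qed



lemma sumL_Cons_fun: "sumL (p # L) = (\<lambda>t. fst p * snd p t + 1 * sumL L t)"
  by (rule ext) simp

lemma sumL_in_FreeSp:
  assumes "set (map snd L) \<subseteq> {evalF M p0 p |p. p \<in> M}"
  shows "sumL L \<in> FreeSp M p0"
  using assms
proof (induct L)
  case Nil
  have "sumL [] = (\<lambda>_. 0)" by (rule ext) simp
  then show ?case unfolding FreeSp_def by (simp add: dcs_zero)
next
  case (Cons p L)
  have "snd p \<in> FreeSp M p0" using Cons.prems evalF_in by auto
  have "sumL L \<in> FreeSp M p0" using Cons by auto
  from FreeSp_comb[OF \<open>snd p \<in> FreeSp M p0\<close> this, of "fst p" 1] show ?case unfolding sumL_Cons_fun .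
qed

lemma bb_sumL:
  assumes B: "B \<in> bilinear_ball (FreeSp M p0) (FreeNorm M p0)"
    and L: "set (map snd L) \<subseteq> {evalF M p0 p |p. p \<in> M}"
  shows "B (sumL L) x = (\<Sum>q\<leftarrow>L. fst q * B (snd q) x)"
  using L
proof (induct L)
  case Nil
  have "B (\<lambda>t. 0 * evalF M p0 p0 t + 0 * evalF M p0 p0 t) x = 0 * B (evalF M p0 p0) x + 0 * B (evalF M p0 p0) x"
    by (rule bb_bil[OF B evalF_in evalF_in])
  then have "B (\<lambda>t. 0) x = 0" by simp
  moreover have "sumL [] = (\<lambda>t. 0)" by (rule ext) simp
  ultimately show ?case by simp
next
  case (Cons p L)
  have sp: "snd p \<in> FreeSp M p0" using Cons.prems evalF_in by auto
  have sL: "sumL L \<in> FreeSp M p0" using Cons.prems sumL_in_FreeSp by auto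
  show ?case unfolding sumL_Cons_fun bb_bil[OF B sp sL] using Cons by simp
qed

lemma free_approx:
  assumes p0: "p0 \<in> M" and e: "e \<in> FreeSp M p0" and eta: "\<eta> > 0"
  shows "\<exists>L. set (map snd L) \<subseteq> {evalF M p0 p |p. p \<in> M} \<and>
    (\<forall>B\<in>bilinear_ball (FreeSp M p0) (FreeNorm M p0). \<forall>x.
        \<bar>B e x - (\<Sum>q\<leftarrow>L. fst q * B (snd q) x)\<bar> \<le> \<eta> * norm x)"
proof -
  obtain L where L: "set (map snd L) \<subseteq> {evalF M p0 p |p. p \<in> M}"
    "\<forall>g\<in>Lip0_ball M p0. \<bar>e g - sumL L g\<bar> \<le> \<eta>"
    using e eta unfolding FreeSp_def dcs_list by blast
  have sL: "sumL L \<in> FreeSp M p0" by (rule sumL_in_FreeSp[OF L(1)])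
  have dE: "(\<lambda>t. 1 * e t + (-1) * sumL L t) \<in> FreeSp M p0" by (rule FreeSp_comb[OF e sL])
  have nd: "FreeNorm M p0 (\<lambda>t. 1 * e t + (-1) * sumL L t) \<le> \<eta>"
    unfolding FreeNorm_def using L(2) by (intro dn_least[OF Lip0_ball_ne]) simp
  have "\<bar>B e x - (\<Sum>q\<leftarrow>L. fst q * B (snd q) x)\<bar> \<le> \<eta> * norm x"
    if B: "B \<in> bilinear_ball (FreeSp M p0) (FreeNorm M p0)" for B x
  proof -
    have "B (\<lambda>t. 1 * e t + (-1) * sumL L t) x = 1 * B e x + (-1) * B (sumL L) x"
      by (rule bb_bil[OF B e sL])
    then have "B e x - (\<Sum>q\<leftarrow>L. fst q * B (snd q) x) = B (\<lambda>t. 1 * e t + (-1) * sumL L t) x"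
      using bb_sumL[OF B L(1)] by simp
    also have "\<bar>\<dots>\<bar> \<le> FreeNorm M p0 (\<lambda>t. 1 * e t + (-1) * sumL L t) * norm x"
      by (rule bb_bound[OF B dE])
    also have "\<dots> \<le> \<eta> * norm x" by (rule mult_right_mono[OF nd]) simp
    finally show ?thesis .
  qed
  then show ?thesis using L(1) by blast
qed

definition etensor :: "('f \<Rightarrow> real) set \<Rightarrow> (('f \<Rightarrow> real) \<Rightarrow> real) \<Rightarrow> ('f \<Rightarrow> real) \<Rightarrow> 'x::real_normed_vector
    \<Rightarrow> ((('f \<Rightarrow> real) \<Rightarrow> 'x \<Rightarrow> real) \<Rightarrow> real)" where
  "etensor E nE e x = (\<lambda>B. if B \<in> bounded_bilinear_forms E nE then B e x else 0)"

lemma proj_tensor_alt: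
  "proj_tensor E nE = dual_closed_span (bounded_bilinear_forms E nE) (bilinear_ball E nE)
       {etensor E nE e x | e x. e \<in> E}"
  unfolding proj_tensor_def etensor_def by simp

lemma bb_bbf: "B \<in> bilinear_ball E nE \<Longrightarrow> B \<in> bounded_bilinear_forms E nE"
  unfolding bilinear_ball_def by blast

lemma tensor_list_approx:
  fixes L1 :: "(real \<times> (((('a::metric_space \<Rightarrow> real) \<Rightarrow> real) \<Rightarrow> 'x::real_normed_vector \<Rightarrow> real) \<Rightarrow> real)) list"
  assumes p0: "p0 \<in> M"
  shows "set (map snd L1) \<subseteq> {etensor (FreeSp M p0) (FreeNorm M p0) e x | e x. e \<in> FreeSp M p0} \<Longrightarrow> \<eta> > 0 \<Longrightarrow>
    \<exists>L. set (map fst L) \<subseteq> {evalF M p0 p |p. p \<in> M} \<and>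
      (\<forall>B\<in>bilinear_ball (FreeSp M p0) (FreeNorm M p0). \<bar>sumL L1 B - (\<Sum>q\<leftarrow>L. B (fst q) (snd q))\<bar> \<le> \<eta>)"
proof (induct L1 arbitrary: \<eta>)
  case Nil
  then show ?case by (intro exI[of _ "[]"]) simp
next
  case (Cons p L1)
  obtain L' where L': "set (map fst L') \<subseteq> {evalF M p0 p |p. p \<in> M}"
    "\<forall>B\<in>bilinear_ball (FreeSp M p0) (FreeNorm M p0). \<bar>sumL L1 B - (\<Sum>q\<leftarrow>L'. B (fst q) (snd q))\<bar> \<le> \<eta>/2"
    using Cons.hyps[of "\<eta>/2"] Cons.prems by auto
  obtain e x where ex: "e \<in> FreeSp M p0" "snd p = etensor (FreeSp M p0) (FreeNorm M p0) e x"
    using Cons.prems by auto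
  define c where "c = fst p"
  define \<eta>2 where "\<eta>2 = \<eta> / (2 * (\<bar>c\<bar> * norm x + 1))"
  have "0 \<le> \<bar>c\<bar> * norm x" by simp
  then have pos: "\<bar>c\<bar> * norm x + 1 > 0" by linarith
  have eta2: "\<eta>2 > 0" using Cons.prems pos unfolding \<eta>2_def by simp
  have eta2b: "\<bar>c\<bar> * (\<eta>2 * norm x) \<le> \<eta> / 2"
  proof -
    have "\<bar>c\<bar> * (\<eta>2 * norm x) = \<eta> / 2 * ((\<bar>c\<bar> * norm x) / (\<bar>c\<bar> * norm x + 1))"
      unfolding \<eta>2_def by (simp add: field_simps)
    also have "\<dots> \<le> \<eta> / 2 * 1"
      using Cons.prems pos by (intro mult_left_mono) (auto simp: divide_le_eq_1)
    finally show ?thesis by simp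
  qed
  obtain L0 where L0: "set (map snd L0) \<subseteq> {evalF M p0 p |p. p \<in> M}"
    "\<forall>B\<in>bilinear_ball (FreeSp M p0) (FreeNorm M p0). \<forall>x::'x.
        \<bar>B e x - (\<Sum>q\<leftarrow>L0. fst q * B (snd q) x)\<bar> \<le> \<eta>2 * norm x"
    using free_approx[OF p0 ex(1) eta2] by blast
  define L where "L = map (\<lambda>q. (snd q, (c * fst q) *\<^sub>R x)) L0 @ L'"
  have "set (map fst L) \<subseteq> {evalF M p0 p |p. p \<in> M}" using L0(1) L'(1) unfolding L_def by auto
  moreover have "\<bar>sumL (p # L1) B - (\<Sum>q\<leftarrow>L. B (fst q) (snd q))\<bar> \<le> \<eta>"
    if B: "B \<in> bilinear_ball (FreeSp M p0) (FreeNorm M p0)" for B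
  proof -
    have sc: "B s ((c * d) *\<^sub>R x) = c * (d * B s x)" if "s \<in> {evalF M p0 p |p. p \<in> M}" for s d
    proof -
      have "linear (B s)" using bb_linear[OF B] evalF_in that by auto
      then show ?thesis unfolding linear_iff by simp
    qed
    have sum1: "(\<Sum>q\<leftarrow>map (\<lambda>q. (snd q, (c * fst q) *\<^sub>R x)) L0. B (fst q) (snd q))
        = c * (\<Sum>q\<leftarrow>L0. fst q * B (snd q) x)"
      using L0(1)
    proof (induct L0)
      case Nil then show ?case by simp
    next
      case (Cons q L0) then show ?case using sc[of "snd q" "fst q"] by (simp add: distrib_left)
    qed
    have head: "fst p * snd p B = c * B e x" unfolding c_def ex(2) etensor_def using bb_bbf[OF B] by simp
    have "sumL (p # L1) B - (\<Sum>q\<leftarrow>L. B (fst q) (snd q))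
        = c * (B e x - (\<Sum>q\<leftarrow>L0. fst q * B (snd q) x)) + (sumL L1 B - (\<Sum>q\<leftarrow>L'. B (fst q) (snd q)))"
      unfolding L_def using head sum1 by (simp add: algebra_simps)
    also have "\<bar>\<dots>\<bar> \<le> \<bar>c\<bar> * (\<eta>2 * norm x) + \<eta>/2"
    proof -
      have "\<bar>c * (B e x - (\<Sum>q\<leftarrow>L0. fst q * B (snd q) x))\<bar> \<le> \<bar>c\<bar> * (\<eta>2 * norm x)"
      proof -
        have "\<bar>B e x - (\<Sum>q\<leftarrow>L0. fst q * B (snd q) x)\<bar> \<le> \<eta>2 * norm x"
          using L0(2) B by blast
        then show ?thesis unfolding abs_mult by (rule mult_left_mono) simp
      qed
      moreover have "\<bar>sumL L1 B - (\<Sum>q\<leftarrow>L'. B (fst q) (snd q))\<bar> \<le> \<eta>/2" using L'(2) B by auto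
      ultimately show ?thesis
        using abs_triangle_ineq[of "c * (B e x - (\<Sum>q\<leftarrow>L0. fst q * B (snd q) x))" "sumL L1 B - (\<Sum>q\<leftarrow>L'. B (fst q) (snd q))"]
        by linarith
    qed
    also have "\<dots> \<le> \<eta>" using eta2b by simp
    finally show ?thesis .
  qed
  ultimately show ?case by blast
qed

lemma tensor_approx:
  assumes p0: "p0 \<in> M" and z: "z \<in> proj_tensor (FreeSp M p0) (FreeNorm M p0)" and eta: "\<eta> > 0"
  shows "\<exists>L. set (map fst L) \<subseteq> {evalF M p0 p |p. p \<in> M} \<and>
      (\<forall>B\<in>bilinear_ball (FreeSp M p0) (FreeNorm M p0). \<bar>z B - (\<Sum>q\<leftarrow>L. B (fst q) (snd q))\<bar> \<le> \<eta>)"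
proof -
  obtain L1 where L1: "set (map snd L1) \<subseteq> {etensor (FreeSp M p0) (FreeNorm M p0) e x | e x. e \<in> FreeSp M p0}"
    "\<forall>B\<in>bilinear_ball (FreeSp M p0) (FreeNorm M p0). \<bar>z B - sumL L1 B\<bar> \<le> \<eta>/2"
    using z eta unfolding proj_tensor_alt dcs_list by (meson half_gt_zero)
  obtain L where L: "set (map fst L) \<subseteq> {evalF M p0 p |p. p \<in> M}"
    "\<forall>B\<in>bilinear_ball (FreeSp M p0) (FreeNorm M p0). \<bar>sumL L1 B - (\<Sum>q\<leftarrow>L. B (fst q) (snd q))\<bar> \<le> \<eta>/2"
    using tensor_list_approx[OF p0 L1(1), of "\<eta>/2"] eta by auto
  have "\<bar>z B - (\<Sum>q\<leftarrow>L. B (fst q) (snd q))\<bar> \<le> \<eta>"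
    if "B \<in> bilinear_ball (FreeSp M p0) (FreeNorm M p0)" for B
  proof -
    have h: "\<bar>z B - sumL L1 B\<bar> \<le> \<eta>/2" "\<bar>sumL L1 B - (\<Sum>q\<leftarrow>L. B (fst q) (snd q))\<bar> \<le> \<eta>/2"
      using L1(2) L(2) that by auto
    have "\<bar>z B - (\<Sum>q\<leftarrow>L. B (fst q) (snd q))\<bar> \<le> \<bar>z B - sumL L1 B\<bar> + \<bar>sumL L1 B - (\<Sum>q\<leftarrow>L. B (fst q) (snd q))\<bar>"
      using abs_triangle_ineq[of "z B - sumL L1 B" "sumL L1 B - (\<Sum>q\<leftarrow>L. B (fst q) (snd q))"] by simp
    then show ?thesis using h by linarith
  qed
  then show ?thesis using L(1) by blast
qed



definition cutf :: "real \<Rightarrow> real \<Rightarrow> real \<Rightarrow> real" where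
  "cutf s \<kappa> r = max 0 (min 1 (\<kappa> * ln (max s r / s)))"

lemma cutf_01: "0 \<le> cutf s \<kappa> r" "cutf s \<kappa> r \<le> 1"
  unfolding cutf_def by auto

lemma cutf_0: "0 < s \<Longrightarrow> r \<le> s \<Longrightarrow> cutf s \<kappa> r = 0"
  unfolding cutf_def by (simp add: max_absorb1)

lemma cutf_1:
  assumes "0 < s" "0 < \<kappa>" "s * exp (1/\<kappa>) \<le> r"
  shows "cutf s \<kappa> r = 1"
proof -
  have e1: "1 \<le> exp (1/\<kappa>)" using assms(2) by simp
  have "s \<le> s * exp (1/\<kappa>)" using assms(1) e1 by simp
  then have sr: "s \<le> r" using assms(3) by linarith
  then have m: "max s r / s = r / s" by (simp add: max_absorb2)
  have "exp (1/\<kappa>) \<le> r / s" using assms(1,3) by (simp add: le_divide_eq mult.commute)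
  then have "1/\<kappa> \<le> ln (r / s)"
    using assms(1) sr by (subst ln_ge_iff) (auto intro: divide_pos_pos)
  then have "1 \<le> \<kappa> * ln (r / s)" using assms(2) by (simp add: divide_le_eq mult.commute)
  then show ?thesis unfolding cutf_def m by simp
qed

lemma clamp_lip: "\<bar>max 0 (min 1 (x::real)) - max 0 (min 1 y)\<bar> \<le> \<bar>x - y\<bar>"
  by (auto simp: max_def min_def abs_if)

lemma cutf_lip_le:
  assumes s: "0 < s" and k: "0 \<le> \<kappa>" and r: "0 \<le> r" and rr: "r \<le> r'"
  shows "\<bar>cutf s \<kappa> r - cutf s \<kappa> r'\<bar> * r \<le> \<kappa> * (r' - r)"
proof -
  define A where "A = max s r"
  define A' where "A' = max s r'"
  have A0: "0 < A" "r \<le> A" "A \<le> A'" using s rr unfolding A_def A'_def by auto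
  have AA: "A' - A \<le> r' - r" unfolding A_def A'_def using rr by (simp add: max_def)
  have lnd: "ln (A' / s) - ln (A / s) = ln A' - ln A"
    using A0 s by (simp add: ln_div)
  have l0: "0 \<le> ln A' - ln A" using A0 by simp
  have "\<bar>cutf s \<kappa> r - cutf s \<kappa> r'\<bar> \<le> \<bar>\<kappa> * ln (A / s) - \<kappa> * ln (A' / s)\<bar>"
    unfolding cutf_def A_def A'_def by (rule clamp_lip)
  also have "\<dots> = \<kappa> * (ln A' - ln A)"
    using lnd k l0 by (simp add: right_diff_distrib[symmetric] abs_mult abs_minus_commute)
  finally have h1: "\<bar>cutf s \<kappa> r - cutf s \<kappa> r'\<bar> \<le> \<kappa> * (ln A' - ln A)" .
  have "(ln A' - ln A) * A \<le> A' - A"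
  proof -
    have "ln A' - ln A = ln (A' / A)" using A0 by (simp add: ln_div)
    also have "\<dots> \<le> A' / A - 1" using A0 by (intro ln_le_minus_one) simp
    finally have "(ln A' - ln A) * A \<le> (A' / A - 1) * A" using A0 by (simp add: mult_right_mono)
    also have "\<dots> = A' - A" using A0 by (simp add: field_simps)
    finally show ?thesis .
  qed
  then have h2: "(ln A' - ln A) * r \<le> r' - r"
    using AA A0 l0 by (meson mult_left_mono order_trans)
  have "\<bar>cutf s \<kappa> r - cutf s \<kappa> r'\<bar> * r \<le> \<kappa> * (ln A' - ln A) * r"
    using h1 r by (simp add: mult_right_mono)
  also have "\<dots> = \<kappa> * ((ln A' - ln A) * r)" by simp
  also have "\<dots> \<le> \<kappa> * (r' - r)" using h2 k by (simp add: mult_left_mono)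
  finally show ?thesis .
qed

lemma cutf_lip:
  assumes s: "0 < s" and k: "0 \<le> \<kappa>" and r: "0 \<le> r" "0 \<le> r'"
  shows "\<bar>cutf s \<kappa> r - cutf s \<kappa> r'\<bar> * min r r' \<le> \<kappa> * \<bar>r - r'\<bar>"
proof (cases "r \<le> r'")
  case True then show ?thesis using cutf_lip_le[OF s k r(1) True] by (simp add: min_absorb1)
next
  case False then have "r' \<le> r" by simp
  have e: "min r r' = r'" "\<bar>r - r'\<bar> = r - r'" using \<open>r' \<le> r\<close> by auto
  from cutf_lip_le[OF s k r(2) \<open>r' \<le> r\<close>] show ?thesis unfolding e by (simp add: abs_minus_commute)
qed

definition cut_props :: "'a::metric_space set \<Rightarrow> real \<Rightarrow> 'a \<Rightarrow> 'a \<Rightarrow> ('a \<Rightarrow> real) \<Rightarrow> bool" where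
  "cut_props Q \<kappa> c u a \<longleftrightarrow> (\<forall>m. 0 \<le> a m \<and> a m \<le> 1) \<and>
     (\<forall>m m'. \<bar>a m - a m'\<bar> * min (dist m c) (dist m' c) \<le> \<kappa> * dist m m') \<and>
     a u = 1 \<and> (\<forall>q\<in>Q. q = c \<or> a q = 0)"

lemma far_case:
  fixes c u :: "'a::metric_space"
  assumes s: "0 < s" and k: "0 < \<kappa>" and u: "s * exp (1/\<kappa>) \<le> dist u c"
    and Q: "\<forall>q\<in>Q. dist q c \<le> s"
  shows "cut_props Q \<kappa> c u (\<lambda>m. cutf s \<kappa> (dist m c))"
  unfolding cut_props_def
proof (intro conjI allI ballI)
  fix m m'
  have "\<bar>cutf s \<kappa> (dist m c) - cutf s \<kappa> (dist m' c)\<bar> * min (dist m c) (dist m' c)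
      \<le> \<kappa> * \<bar>dist m c - dist m' c\<bar>" by (rule cutf_lip[OF s less_imp_le[OF k]]) simp_all
  also have "\<dots> \<le> \<kappa> * dist m m'"
    using abs_dist_diff_le[of m c m'] k by (intro mult_left_mono) (auto simp: dist_commute)
  finally show "\<bar>cutf s \<kappa> (dist m c) - cutf s \<kappa> (dist m' c)\<bar> * min (dist m c) (dist m' c) \<le> \<kappa> * dist m m'" .
next
  show "cutf s \<kappa> (dist u c) = 1" by (rule cutf_1[OF s k u])
next
  fix q assume "q \<in> Q" then show "q = c \<or> cutf s \<kappa> (dist q c) = 0" using Q cutf_0[OF s] by simp
qed (auto simp: cutf_01)

lemma near_case:
  fixes c u :: "'a::metric_space"
  assumes k: "0 < \<kappa>" and uc: "u \<noteq> c"
    and Q: "\<forall>q\<in>Q. q \<noteq> c \<longrightarrow> dist u c * exp (1/\<kappa>) \<le> dist q c"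
  shows "cut_props Q \<kappa> c u (\<lambda>m. 1 - cutf (dist u c) \<kappa> (dist m c))"
  unfolding cut_props_def
proof (intro conjI allI ballI)
  have s: "0 < dist u c" using uc by simp
  fix m m'
  have "\<bar>(1 - cutf (dist u c) \<kappa> (dist m c)) - (1 - cutf (dist u c) \<kappa> (dist m' c))\<bar> * min (dist m c) (dist m' c)
      = \<bar>cutf (dist u c) \<kappa> (dist m c) - cutf (dist u c) \<kappa> (dist m' c)\<bar> * min (dist m c) (dist m' c)"
    by (simp add: abs_minus_commute)
  also have "\<dots> \<le> \<kappa> * \<bar>dist m c - dist m' c\<bar>" by (rule cutf_lip[OF s less_imp_le[OF k]]) simp_all
  also have "\<dots> \<le> \<kappa> * dist m m'"
    using abs_dist_diff_le[of m c m'] k by (intro mult_left_mono) (auto simp: dist_commute)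
  finally show "\<bar>(1 - cutf (dist u c) \<kappa> (dist m c)) - (1 - cutf (dist u c) \<kappa> (dist m' c))\<bar> * min (dist m c) (dist m' c) \<le> \<kappa> * dist m m'" .
next
  have s: "0 < dist u c" using uc by simp
  show "1 - cutf (dist u c) \<kappa> (dist u c) = 1" using cutf_0[OF s] by simp
next
  have s: "0 < dist u c" using uc by simp
  fix q assume "q \<in> Q"
  then show "q = c \<or> 1 - cutf (dist u c) \<kappa> (dist q c) = 0"
    using Q cutf_1[OF s k] by (auto simp: mult.commute)
qed (auto simp: cutf_01)

lemma finite_min_dist:
  fixes Q :: "'a::metric_space set"
  assumes "finite Q"
  shows "\<exists>\<rho>>0. \<forall>q\<in>Q. \<forall>q'\<in>Q. q \<noteq> q' \<longrightarrow> \<rho> \<le> dist q q'"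
proof -
  define D where "D = {dist q q' | q q'. q \<in> Q \<and> q' \<in> Q \<and> q \<noteq> q'}"
  have "D \<subseteq> (\<lambda>(q, q'). dist q q') ` (Q \<times> Q)" unfolding D_def by auto
  then have fD: "finite D" using assms finite_subset by blast
  have pos: "\<forall>d\<in>D. d > 0" unfolding D_def by auto
  show ?thesis
  proof (cases "D = {}")
    case True then show ?thesis unfolding D_def by (intro exI[of _ 1]) auto
  next
    case False
    have "Min D > 0" using fD False pos by simp
    moreover have "\<forall>q\<in>Q. \<forall>q'\<in>Q. q \<noteq> q' \<longrightarrow> Min D \<le> dist q q'"
      using fD unfolding D_def by (auto intro: Min_le)
    ultimately show ?thesis by blast
  qed
qed

lemma choose_pair:
  fixes Q M :: "'a::metric_space set"
  assumes p0: "p0 \<in> M" and fQ: "finite Q" and QM: "Q \<subseteq> M"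
    and nbud: "\<not> (bounded M \<and> uniformly_discrete M)" and k: "0 < \<kappa>"
  shows "\<exists>c u a. c \<in> M \<and> u \<in> M \<and> u \<noteq> c \<and> cut_props Q \<kappa> c u a \<and> (p0 = c \<or> a p0 = 0)"
proof -
  define Q' where "Q' = insert p0 Q"
  have fQ': "finite Q'" "Q' \<subseteq> M" "p0 \<in> Q'" using fQ QM p0 unfolding Q'_def by auto
  have red: "\<exists>c u a. c \<in> M \<and> u \<in> M \<and> u \<noteq> c \<and> cut_props Q' \<kappa> c u a"
  proof (cases "bounded M")
    case False
    define s where "s = Max ((\<lambda>q. dist q p0) ` Q') + 1"
    have sQ: "\<forall>q\<in>Q'. dist q p0 \<le> s"
    proof
      fix q assume "q \<in> Q'"
      then have "dist q p0 \<le> Max ((\<lambda>q. dist q p0) ` Q')" using fQ'(1) by (intro Max_ge) auto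
      then show "dist q p0 \<le> s" unfolding s_def by simp
    qed
    have "dist p0 p0 \<le> Max ((\<lambda>q. dist q p0) ` Q')" using fQ' by (intro Max_ge) auto
    then have s0: "0 < s" unfolding s_def by simp
    obtain u where u: "u \<in> M" "s * exp (1/\<kappa>) < dist p0 u"
      using False unfolding bounded_any_center[of M p0] by (meson not_le)
    have "u \<noteq> p0" using u s0 by (metis dist_self exp_gt_zero mult_pos_pos not_less_iff_gr_or_eq)
    moreover have "cut_props Q' \<kappa> p0 u (\<lambda>m. cutf s \<kappa> (dist m p0))"
      using far_case[OF s0 k _ sQ] u(2) by (simp add: dist_commute)
    ultimately show ?thesis using u(1) p0 by blast
  next
    case True
    then have nud: "\<not> uniformly_discrete M" using nbud by simp
    obtain \<rho> where rho: "\<rho> > 0" "\<forall>q\<in>Q'. \<forall>q'\<in>Q'. q \<noteq> q' \<longrightarrow> \<rho> \<le> dist q q'"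
      using finite_min_dist[OF fQ'(1)] by blast
    define K where "K = exp (1/\<kappa>)"
    have K1: "1 \<le> K" "0 < K" using k unfolding K_def by auto
    have "\<rho> / (K * K) > 0" using rho K1 by simp
    then obtain u v where uv: "u \<in> M" "v \<in> M" "u \<noteq> v" "dist u v < \<rho> / (K * K)"
      using nud unfolding uniformly_discrete_def by (meson not_le)
    have tK: "dist u v * K * K < \<rho>" using uv(4) K1 by (simp add: pos_less_divide_eq mult.assoc)
    show ?thesis
    proof (cases "\<forall>q\<in>Q'. q \<noteq> v \<longrightarrow> dist u v * K \<le> dist q v")
      case True
      then have "cut_props Q' \<kappa> v u (\<lambda>m. 1 - cutf (dist u v) \<kappa> (dist m v))"
        using near_case[OF k uv(3)] unfolding K_def by blast
      then show ?thesis using uv by blast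
    next
      case False
      then obtain q where q: "q \<in> Q'" "q \<noteq> v" "dist q v < dist u v * K" by (meson not_le)
      have qM: "q \<in> M" using q(1) fQ'(2) by blast
      have "\<forall>q'\<in>Q'. q' \<noteq> q \<longrightarrow> dist v q * K \<le> dist q' q"
      proof (intro ballI impI)
        fix q' assume q': "q' \<in> Q'" "q' \<noteq> q"
        have "dist v q * K \<le> dist u v * K * K" using q(3) K1 by (simp add: dist_commute)
        also have "\<dots> \<le> \<rho>" using tK by simp
        also have "\<dots> \<le> dist q' q" using rho(2) q' q(1) by blast
        finally show "dist v q * K \<le> dist q' q" .
      qed
      then have "cut_props Q' \<kappa> q v (\<lambda>m. 1 - cutf (dist v q) \<kappa> (dist m q))"
        using near_case[OF k q(2)[symmetric]] unfolding K_def by blast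
      then show ?thesis using uv qM q(2) by blast
    qed
  qed
  then obtain c u a where cua: "c \<in> M" "u \<in> M" "u \<noteq> c" "cut_props Q' \<kappa> c u a" by blast
  then have "cut_props Q \<kappa> c u a" "p0 = c \<or> a p0 = 0"
    unfolding cut_props_def Q'_def by auto
  then show ?thesis using cua by blast
qed



lemma zero_form_bb:
  assumes p0: "p0 \<in> M"
  shows "(\<lambda>e x. 0) \<in> bilinear_ball (FreeSp M p0) (FreeNorm M p0)"
proof -
  have "0 \<le> FreeNorm M p0 e" if e: "e \<in> FreeSp M p0" for e
  proof -
    obtain C where "\<forall>g\<in>Lip0_ball M p0. \<bar>e g\<bar> \<le> C" using FreeSp_bounded[OF p0 e] by blast
    then show ?thesis unfolding FreeNorm_def by (rule dn_nonneg[OF Lip0_ball_ne])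
  qed
  then show ?thesis
    unfolding bilinear_ball_def bounded_bilinear_forms_def
    by (auto intro!: exI[of _ 0] simp: linear_iff)
qed

lemma tensor_bounded:
  fixes z :: "(((('a::metric_space \<Rightarrow> real) \<Rightarrow> real) \<Rightarrow> 'x::real_normed_vector \<Rightarrow> real) \<Rightarrow> real)"
  assumes p0: "p0 \<in> M" and z: "z \<in> proj_tensor (FreeSp M p0) (FreeNorm M p0)"
  shows "\<exists>C. \<forall>B\<in>bilinear_ball (FreeSp M p0) (FreeNorm M p0). \<bar>z B\<bar> \<le> C"
proof -
  have "\<forall>s\<in>{etensor (FreeSp M p0) (FreeNorm M p0) e x | e x. e \<in> FreeSp M p0}.
      \<exists>C. \<forall>B\<in>bilinear_ball (FreeSp M p0) (FreeNorm M p0). \<bar>s B\<bar> \<le> C"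
  proof
    fix s assume "s \<in> {etensor (FreeSp M p0) (FreeNorm M p0) e x | e x. e \<in> FreeSp M p0}"
    then obtain e x where ex: "e \<in> FreeSp M p0" "s = etensor (FreeSp M p0) (FreeNorm M p0) e x" by blast
    have "\<bar>s B\<bar> \<le> FreeNorm M p0 e * norm x" if "B \<in> bilinear_ball (FreeSp M p0) (FreeNorm M p0)" for B
      using bb_bound[OF that ex(1)] bb_bbf[OF that] unfolding ex(2) etensor_def by simp
    then show "\<exists>C. \<forall>B\<in>bilinear_ball (FreeSp M p0) (FreeNorm M p0). \<bar>s B\<bar> \<le> C" by blast
  qed
  then show ?thesis using dcs_bounded z unfolding proj_tensor_alt by blast
qed

lemma etensor_in:
  "e \<in> E \<Longrightarrow> etensor E nE e x \<in> proj_tensor E nE"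
  unfolding proj_tensor_alt by (rule dcs_S) (auto simp: etensor_def)

lemma tensor_comb:
  "z \<in> proj_tensor E nE \<Longrightarrow> w \<in> proj_tensor E nE \<Longrightarrow> (\<lambda>t. a * z t + b * w t) \<in> proj_tensor E nE"
  unfolding proj_tensor_def by (rule dcs_comb)

lemma sum_list_neg: "(\<Sum>q\<leftarrow>L. - f q) = - (\<Sum>q\<leftarrow>L. f q :: real)"
  by (induct L) auto

lemma sum_list_div: "(\<Sum>q\<leftarrow>L. f q / (l::real)) = (\<Sum>q\<leftarrow>L. f q) / l"
  by (induct L) (auto simp: add_divide_distrib)

lemma final_arith:
  fixes e :: real
  assumes "0 < e" "e \<le> 1"
  shows "2 - e \<le> (1 - 2 * (e/8)) / (1 + 2 * (e/16)) - e/8 + 1 / (1 + 2 * (e/16))"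
proof -
  have l: "1 + 2 * (e/16) > 0" using assms by simp
  have "(2 - e + e/8) * (1 + 2 * (e/16)) \<le> 2 - 2 * (e/8)"
    using assms by (simp add: algebra_simps power2_eq_square)
  then have "2 - e + e/8 \<le> (2 - 2 * (e/8)) / (1 + 2 * (e/16))" using l by (simp add: le_divide_eq)
  also have "(2 - 2 * (e/8)) / (1 + 2 * (e/16)) = (1 - 2 * (e/8)) / (1 + 2 * (e/16)) + 1 / (1 + 2 * (e/16))"
    by (simp add: add_divide_distrib[symmetric])
  finally show ?thesis by simp
qed



lemma ball_ne: "p0 \<in> M \<Longrightarrow> bilinear_ball (FreeSp M p0) (FreeNorm M p0) \<noteq> {}"
  using zero_form_bb by blast

theorem theorem1p2:
  fixes M :: "'a::metric_space set" and p0 :: 'a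
  assumes "p0 \<in> M"
    and "\<not> (bounded M \<and> uniformly_discrete M)"
    and "\<exists>x::'x::banach. x \<noteq> 0"
  shows "octahedral (proj_tensor (FreeSp M p0) (FreeNorm M p0) :: ((((('a \<Rightarrow> real) \<Rightarrow> real) \<Rightarrow> 'x \<Rightarrow> real) \<Rightarrow> real) set))
                    (proj_tensor_norm (FreeSp M p0) (FreeNorm M p0))"
proof -
  have p0: "p0 \<in> M" by (rule assms(1))
  obtain x0 :: 'x where x0: "x0 \<noteq> 0" using assms(3) by blast
  define x1 where "x1 = sgn x0"
  have nx1: "norm x1 = 1" using x0 unfolding x1_def by (simp add: norm_sgn)
  obtain \<phi> where \<phi>: "linear \<phi>" "\<phi> x1 = norm x1" "\<And>x. \<bar>\<phi> x\<bar> \<le> norm x"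
    using hahn_banach_norming[of x1] by blast
  have \<phi>1: "\<phi> x1 = 1" using \<phi>(2) nx1 by simp
  let ?E = "FreeSp M p0" and ?nE = "FreeNorm M p0"
  let ?Ball = "bilinear_ball ?E ?nE :: ((('a \<Rightarrow> real) \<Rightarrow> real) \<Rightarrow> 'x \<Rightarrow> real) set"
  let ?Z = "proj_tensor ?E ?nE :: ((((('a \<Rightarrow> real) \<Rightarrow> real) \<Rightarrow> 'x \<Rightarrow> real) \<Rightarrow> real) set)"
  let ?S = "{evalF M p0 p |p. p \<in> M}"
  show ?thesis unfolding octahedral_def
  proof (intro allI impI)
    fix xs :: "(((('a \<Rightarrow> real) \<Rightarrow> real) \<Rightarrow> 'x \<Rightarrow> real) \<Rightarrow> real) list" and \<epsilon> :: real
    assume H: "set xs \<subseteq> {z \<in> ?Z. proj_tensor_norm ?E ?nE z = 1} \<and> 0 < \<epsilon>"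
    define e where "e = min \<epsilon> 1"
    have e: "0 < e" "e \<le> 1" "e \<le> \<epsilon>" using H by (auto simp: e_def)
    define \<delta> where "\<delta> = e/8"
    define \<kappa> where "\<kappa> = e/16"
    define lam where "lam = 1 + 2*\<kappa>"
    have d0: "\<delta> > 0" and k0: "\<kappa> > 0" and lam0: "lam > 0" using e unfolding \<delta>_def \<kappa>_def lam_def by auto
    have per: "\<forall>z\<in>set xs. \<exists>LB. set (map fst (fst LB)) \<subseteq> ?S \<and> snd LB \<in> ?Ball \<and>
        (\<forall>B\<in>?Ball. \<bar>z B - (\<Sum>q\<leftarrow>fst LB. B (fst q) (snd q))\<bar> \<le> \<delta>) \<and>
        1 - 2*\<delta> \<le> (\<Sum>q\<leftarrow>fst LB. snd LB (fst q) (snd q))"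
    proof
      fix z assume z: "z \<in> set xs"
      have zZ: "z \<in> ?Z" and Nz: "proj_tensor_norm ?E ?nE z = 1" using H z by auto
      obtain L where L: "set (map fst L) \<subseteq> ?S" "\<forall>B\<in>?Ball. \<bar>z B - (\<Sum>q\<leftarrow>L. B (fst q) (snd q))\<bar> \<le> \<delta>"
        using tensor_approx[OF p0 zZ d0] by blast
      obtain C where C: "\<forall>B\<in>?Ball. \<bar>z B\<bar> \<le> C" using tensor_bounded[OF p0 zZ] by blast
      have "1 - \<delta> < dual_norm ?Ball z" using Nz d0 unfolding proj_tensor_norm_def by simp
      then obtain B where B: "B \<in> ?Ball" "1 - \<delta> < \<bar>z B\<bar>" using dn_approx[OF ball_ne[OF p0] C] by blast
      define SB where "SB = (\<Sum>q\<leftarrow>L. B (fst q) (snd q))"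
      have h1: "\<bar>z B - SB\<bar> \<le> \<delta>" using L(2) B(1) unfolding SB_def by blast
      have "\<bar>z B\<bar> \<le> \<bar>z B - SB\<bar> + \<bar>SB\<bar>" using abs_triangle_ineq[of "z B - SB" SB] by simp
      then have SB: "1 - 2*\<delta> \<le> \<bar>SB\<bar>" using B(2) h1 by linarith
      show "\<exists>LB. set (map fst (fst LB)) \<subseteq> ?S \<and> snd LB \<in> ?Ball \<and>
        (\<forall>B\<in>?Ball. \<bar>z B - (\<Sum>q\<leftarrow>fst LB. B (fst q) (snd q))\<bar> \<le> \<delta>) \<and>
        1 - 2*\<delta> \<le> (\<Sum>q\<leftarrow>fst LB. snd LB (fst q) (snd q))"
      proof (cases "0 \<le> SB")
        case True
        then have "1 - 2*\<delta> \<le> (\<Sum>q\<leftarrow>L. B (fst q) (snd q))" using SB unfolding SB_def by simp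
        then show ?thesis using L B(1) by (intro exI[of _ "(L, B)"]) simp
      next
        case False
        have nb: "(\<lambda>e x. - B e x) \<in> ?Ball" by (rule bb_neg[OF B(1)])
        have "(\<Sum>q\<leftarrow>L. - B (fst q) (snd q)) = - SB" unfolding SB_def by (rule sum_list_neg)
        then have "1 - 2*\<delta> \<le> (\<Sum>q\<leftarrow>L. - B (fst q) (snd q))" using SB False by simp
        then show ?thesis using L nb by (intro exI[of _ "(L, \<lambda>e x. - B e x)"]) simp
      qed
    qed
    from bchoice[OF per] obtain LB where LB: "\<forall>z\<in>set xs. set (map fst (fst (LB z))) \<subseteq> ?S \<and> snd (LB z) \<in> ?Ball \<and>
        (\<forall>B\<in>?Ball. \<bar>z B - (\<Sum>q\<leftarrow>fst (LB z). B (fst q) (snd q))\<bar> \<le> \<delta>) \<and>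
        1 - 2*\<delta> \<le> (\<Sum>q\<leftarrow>fst (LB z). snd (LB z) (fst q) (snd q))" by blast
    define Sused where "Sused = (\<Union>z\<in>set xs. set (map fst (fst (LB z))))"
    have fS: "finite Sused" unfolding Sused_def by simp
    have SS: "Sused \<subseteq> ?S" using LB unfolding Sused_def by blast
    define pt where "pt s = (SOME p. p \<in> M \<and> s = evalF M p0 p)" for s
    have pt: "pt s \<in> M \<and> s = evalF M p0 (pt s)" if "s \<in> Sused" for s
    proof -
      from SS that obtain p where "p \<in> M \<and> s = evalF M p0 p" by blast
      then show ?thesis unfolding pt_def by (rule someI)
    qed
    define Q where "Q = pt ` Sused"
    have fQ: "finite Q" unfolding Q_def using fS by simp
    have QM: "Q \<subseteq> M" unfolding Q_def using pt by blast
    obtain c u a where cua: "c \<in> M" "u \<in> M" "u \<noteq> c" "cut_props Q \<kappa> c u a" "p0 = c \<or> a p0 = 0"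
      using choose_pair[OF p0 fQ QM assms(2) k0] by blast
    have a0: "\<And>m. 0 \<le> a m" and a1: "\<And>m. a m \<le> 1"
      and alog: "\<And>m m'. \<bar>a m - a m'\<bar> * min (dist m c) (dist m' c) \<le> \<kappa> * dist m m'"
      and au: "a u = 1" and aQ: "\<forall>q\<in>Q. q = c \<or> a q = 0"
      using cua(4) unfolding cut_props_def by auto
    have modB: "\<exists>B'\<in>?Ball. \<forall>p\<in>M. \<forall>x. B' (evalF M p0 p) x =
        (B (evalF M p0 p) x + a p * (B (evalF M p0 c) x - dist p c * \<phi> x - B (evalF M p0 p) x)) / lam"
      if "B \<in> ?Ball" for B
      using modify_form[OF p0 that cua(1) \<phi>(1) \<phi>(3) a0 a1 less_imp_le[OF k0] alog cua(5)]
      unfolding lam_def by blast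
    have keyQ: "B' (evalF M p0 p) x = B (evalF M p0 p) x / lam"
      if f: "\<forall>p\<in>M. \<forall>x. B' (evalF M p0 p) x =
        (B (evalF M p0 p) x + a p * (B (evalF M p0 c) x - dist p c * \<phi> x - B (evalF M p0 p) x)) / lam"
        and p: "p \<in> Q" for B' B p x
    proof -
      have pM: "p \<in> M" using p QM by blast
      show ?thesis
      proof (cases "p = c")
        case True then show ?thesis using f pM by simp
      next
        case False then have "a p = 0" using aQ p by blast
        then show ?thesis using f pM by simp
      qed
    qed
    have keyU: "B' (evalF M p0 u) x1 - B' (evalF M p0 c) x1 = - dist u c / lam"
      if f: "\<forall>p\<in>M. \<forall>x. B' (evalF M p0 p) x =
        (B (evalF M p0 p) x + a p * (B (evalF M p0 c) x - dist p c * \<phi> x - B (evalF M p0 p) x)) / lam"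
      for B' B
    proof -
      have "B' (evalF M p0 u) x1 = (B (evalF M p0 c) x1 - dist u c) / lam"
        using f cua(2) au \<phi>1 by simp
      moreover have "B' (evalF M p0 c) x1 = B (evalF M p0 c) x1 / lam" using f cua(1) by simp
      ultimately show ?thesis by (simp add: diff_divide_distrib)
    qed
    define dif where "dif = (\<lambda>t. evalF M p0 u t - evalF M p0 c t)"
    have difE: "dif \<in> ?E"
      using FreeSp_comb[OF evalF_in[of M p0 u] evalF_in[of M p0 c], of 1 "-1"] unfolding dif_def by simp
    define y' where "y' = (etensor ?E ?nE dif x1 :: (((('a \<Rightarrow> real) \<Rightarrow> real) \<Rightarrow> 'x \<Rightarrow> real) \<Rightarrow> real))"
    have y'Z: "y' \<in> ?Z" unfolding y'_def by (rule etensor_in[OF difE])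
    have y'B: "y' B = B (evalF M p0 u) x1 - B (evalF M p0 c) x1" if B: "B \<in> ?Ball" for B
    proof -
      have "y' B = B dif x1" unfolding y'_def etensor_def using bb_bbf[OF B] by simp
      also have "\<dots> = B (\<lambda>t. 1 * evalF M p0 u t + (-1) * evalF M p0 c t) x1" unfolding dif_def by simp
      also have "\<dots> = 1 * B (evalF M p0 u) x1 + (-1) * B (evalF M p0 c) x1"
        by (rule bb_bil[OF B evalF_in evalF_in])
      finally show ?thesis by simp
    qed
    have y'b: "\<forall>B\<in>?Ball. \<bar>y' B\<bar> \<le> dist u c"
    proof
      fix B assume B: "B \<in> ?Ball"
      have "y' B = B dif x1" unfolding y'_def etensor_def using bb_bbf[OF B] by simp
      also have "\<bar>\<dots>\<bar> \<le> ?nE dif * norm x1" by (rule bb_bound[OF B difE])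
      also have "\<dots> \<le> dist u c" using FreeNorm_diff[OF cua(2,1), of p0] nx1 unfolding dif_def by simp
      finally show "\<bar>y' B\<bar> \<le> dist u c" .
    qed
    define Ny where "Ny = dual_norm ?Ball y'"
    have Ny_le: "Ny \<le> dist u c" unfolding Ny_def by (rule dn_least[OF ball_ne[OF p0] y'b])
    obtain B0 where B0: "B0 \<in> ?Ball" "\<forall>p\<in>M. \<forall>x. B0 (evalF M p0 p) x =
        ((\<lambda>e x. 0) (evalF M p0 p) x + a p * ((\<lambda>e x. 0) (evalF M p0 c) x - dist p c * \<phi> x - (\<lambda>e x. 0) (evalF M p0 p) x)) / lam"
      using modB[OF zero_form_bb[OF p0]] by blast
    have "y' B0 = - dist u c / lam" using y'B[OF B0(1)] keyU[OF B0(2)] by simp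
    then have "\<bar>y' B0\<bar> = dist u c / lam" using lam0 by simp
    then have Ny_ge: "dist u c / lam \<le> Ny" unfolding Ny_def using dn_upper[OF y'b B0(1)] by simp
    have duc: "0 < dist u c" using cua(3) by simp
    have Ny0: "0 < Ny" using Ny_ge duc lam0 by (meson divide_pos_pos order_less_le_trans)
    define y where "y = (\<lambda>t. (1/Ny) * y' t)"
    have yZ: "y \<in> ?Z" using tensor_comb[OF y'Z y'Z, of "1/Ny" 0] unfolding y_def by simp
    have Ny1: "proj_tensor_norm ?E ?nE y = 1"
      unfolding proj_tensor_norm_def y_def using dn_scale[OF ball_ne[OF p0] y'b, of "1/Ny"] Ny0
      unfolding Ny_def by simp
    show "\<exists>y\<in>?Z. proj_tensor_norm ?E ?nE y = 1 \<and> (\<forall>x\<in>set xs. 2 - \<epsilon> \<le> proj_tensor_norm ?E ?nE (\<lambda>t. x t - y t))"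
    proof (intro bexI[OF _ yZ] conjI Ny1 ballI)
      fix z assume z: "z \<in> set xs"
      have zZ: "z \<in> ?Z" using H z by auto
      have LBz: "set (map fst (fst (LB z))) \<subseteq> ?S" "snd (LB z) \<in> ?Ball"
        "\<forall>B\<in>?Ball. \<bar>z B - (\<Sum>q\<leftarrow>fst (LB z). B (fst q) (snd q))\<bar> \<le> \<delta>"
        "1 - 2*\<delta> \<le> (\<Sum>q\<leftarrow>fst (LB z). snd (LB z) (fst q) (snd q))"
        using LB z by auto
      obtain B' where B': "B' \<in> ?Ball" "\<forall>p\<in>M. \<forall>x. B' (evalF M p0 p) x =
        (snd (LB z) (evalF M p0 p) x + a p * (snd (LB z) (evalF M p0 c) x - dist p c * \<phi> x - snd (LB z) (evalF M p0 p) x)) / lam"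
        using modB[OF LBz(2)] by blast
      have termeq: "B' (fst q) (snd q) = snd (LB z) (fst q) (snd q) / lam" if q: "q \<in> set (fst (LB z))" for q
      proof -
        have s: "fst q \<in> Sused" unfolding Sused_def using q z by auto
        have "pt (fst q) \<in> Q" unfolding Q_def using s by blast
        from keyQ[OF B'(2) this, of "snd q"] pt[OF s] show ?thesis by metis
      qed
      have "(\<Sum>q\<leftarrow>fst (LB z). B' (fst q) (snd q)) = (\<Sum>q\<leftarrow>fst (LB z). snd (LB z) (fst q) (snd q) / lam)"
        using termeq by (metis (no_types, lifting) map_eq_conv)
      also have "\<dots> = (\<Sum>q\<leftarrow>fst (LB z). snd (LB z) (fst q) (snd q)) / lam" by (rule sum_list_div)
      finally have sumeq: "(\<Sum>q\<leftarrow>fst (LB z). B' (fst q) (snd q)) = (\<Sum>q\<leftarrow>fst (LB z). snd (LB z) (fst q) (snd q)) / lam" .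
      have "(1 - 2*\<delta>) / lam \<le> (\<Sum>q\<leftarrow>fst (LB z). B' (fst q) (snd q))"
        unfolding sumeq using LBz(4) lam0 by (simp add: divide_right_mono)
      moreover have "\<bar>z B' - (\<Sum>q\<leftarrow>fst (LB z). B' (fst q) (snd q))\<bar> \<le> \<delta>" using LBz(3) B'(1) by blast
      ultimately have zB: "(1 - 2*\<delta>) / lam - \<delta> \<le> z B'" by linarith
      have "y' B' = - dist u c / lam" using y'B[OF B'(1)] keyU[OF B'(2)] by simp
      then have yB: "y B' = - ((dist u c / Ny) / lam)" unfolding y_def by simp
      have "1 \<le> dist u c / Ny" using Ny_le Ny0 by simp
      then have "1 / lam \<le> (dist u c / Ny) / lam" by (rule divide_right_mono) (use lam0 in simp)
      then have yB2: "y B' \<le> - (1 / lam)" unfolding yB by simp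
      have zyZ: "(\<lambda>t. 1 * z t + (-1) * y t) \<in> ?Z" by (rule tensor_comb[OF zZ yZ])
      then have zyZ': "(\<lambda>t. z t - y t) \<in> ?Z" by simp
      obtain C where C: "\<forall>B\<in>?Ball. \<bar>z B - y B\<bar> \<le> C" using tensor_bounded[OF p0 zyZ'] by blast
      have "\<bar>z B' - y B'\<bar> \<le> proj_tensor_norm ?E ?nE (\<lambda>t. z t - y t)"
        unfolding proj_tensor_norm_def using dn_upper[OF C B'(1)] by simp
      then have "z B' - y B' \<le> proj_tensor_norm ?E ?nE (\<lambda>t. z t - y t)" by linarith
      moreover have "2 - \<epsilon> \<le> (1 - 2*\<delta>) / lam - \<delta> + 1 / lam"
        using final_arith[OF e(1,2)] e(3) unfolding \<delta>_def lam_def \<kappa>_def by linarith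
      ultimately show "2 - \<epsilon> \<le> proj_tensor_norm ?E ?nE (\<lambda>t. z t - y t)" using zB yB2 by linarith
    qed
  qed
qed


end
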